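(* Let $V,W$ be finite-dimensional real vector spaces and let $A(\xi):V\to W$ be a homogeneous symbol on $\mathbb{R}^d$ (matrix entries homogeneous polynomials of a common degree with real coefficients). Denote by $A(\xi)_{\mathbb C}:V_{\mathbb C}\to W_{\mathbb C}$ its complexification, regarded as a polynomial in complex variables $\xi\in\mathbb{C}^d$. The following are equivalent: (1) $\operatorname{rank}_{\mathbb C}A(\xi)_{\mathbb C}$ is constant on $\mathbb{C}^d\setminus\{0\}$; (2) there exist finite-dimensional real vector spaces $U,X$ and homogeneous symbols $B(\xi):U\to V$, $Q(\xi):W\to X$ on $\mathbb{R}^d$ with real coefficients, forming a symbol complex $U\xrightarrow{B(\xi)}V\xrightarrow{A(\xi)}W\xrightarrow{Q(\xi)}X$, such that $$\operatorname{im}B(\xi)_{\mathbb C}=\ker A(\xi)_{\mathbb C}\quad\text{and}\quad \operatorname{im}A(\xi)_{\mathbb C}=\ker Q(\xi)_{\mathbb C}\qquad\text{for all }\xi\in\mathbb{C}^d\setminus\{0\}.$$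
   Context: For a real vector space $V$, $V_{\mathbb C}=\mathbb{C}\otimes_{\mathbb R}V=V\oplus iV$; for a real linear map $f:V\to W$, $f_{\mathbb C}(v_1+iv_2)=f(v_1)+if(v_2)$. The complexification of a symbol $A(\xi)$ on $\mathbb{R}^d$ is $A(\xi)_{\mathbb C}$, with the polynomial entries evaluated at complex $\xi$. *)

theory Defs
  imports Complex_Main "Jordan_Normal_Form.DL_Rank" "Jordan_Normal_Form.Matrix_Kernel"
begin

definition hmonos :: "nat \<Rightarrow> ('d::finite \<Rightarrow> nat) set" where
  "hmonos k = {\<alpha>. sum \<alpha> UNIV = k}"

definition hpoly_eval :: "nat \<Rightarrow> (('d::finite \<Rightarrow> nat) \<Rightarrow> real) \<Rightarrow> ('d \<Rightarrow> complex) \<Rightarrow> complex" where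
  "hpoly_eval k c \<xi> = (\<Sum>\<alpha>\<in>hmonos k. complex_of_real (c \<alpha>) * (\<Prod>l\<in>UNIV. \<xi> l ^ \<alpha> l))"

text \<open>Complexified homogeneous symbol R^n -> R^m (w.r.t. bases): the m x n complex matrix whose
  (i,j) entry is the degree-k homogeneous real polynomial with coefficients C i j, evaluated at xi in C^d.\<close>
definition symbolC :: "nat \<Rightarrow> nat \<Rightarrow> nat \<Rightarrow> (nat \<Rightarrow> nat \<Rightarrow> ('d::finite \<Rightarrow> nat) \<Rightarrow> real)
    \<Rightarrow> ('d \<Rightarrow> complex) \<Rightarrow> complex mat" where
  "symbolC m n k C \<xi> = mat m n (\<lambda>(i,j). hpoly_eval k (C i j) \<xi>)"

definition mat_image :: "'a::comm_ring_1 mat \<Rightarrow> 'a vec set" where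
  "mat_image M = {M *\<^sub>v v | v. v \<in> carrier_vec (dim_col M)}"

definition crank :: "complex mat \<Rightarrow> nat" where
  "crank M = vec_space.rank (dim_row M) M"

end

theory Submission
  imports Defs
begin

lemma finite_hmonos: "finite (hmonos k :: ('d::finite \<Rightarrow> nat) set)"
proof -
  have "hmonos k \<subseteq> (PiE (UNIV::'d set) (\<lambda>_. {..k}))"
  proof
    fix \<alpha> :: "'d \<Rightarrow> nat" assume "\<alpha> \<in> hmonos k"
    then have "sum \<alpha> UNIV = k" by (simp add: hmonos_def)
    then have "\<alpha> l \<le> k" for l by (metis finite UNIV_I member_le_sum zero_le)
    then show "\<alpha> \<in> PiE UNIV (\<lambda>_. {..k})" by auto
  qed
  moreover have "finite (PiE (UNIV::'d set) (\<lambda>_. {..k}))" by (rule finite_PiE) auto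
  ultimately show ?thesis by (rule finite_subset)
qed

definition Hp :: "nat \<Rightarrow> (('d::finite \<Rightarrow> complex) \<Rightarrow> complex) set" where
  "Hp k = {F. \<exists>c. \<forall>\<xi>. F \<xi> = hpoly_eval k c \<xi>}"

lemma HpI: "(\<And>\<xi>. F \<xi> = hpoly_eval k c \<xi>) \<Longrightarrow> F \<in> Hp k"
  unfolding Hp_def by blast

lemma Hp_zero: "(\<lambda>_. 0) \<in> Hp k"
  by (rule HpI[of _ _ "\<lambda>_. 0"]) (simp add: hpoly_eval_def)

lemma Hp_add: assumes "F \<in> Hp k" "G \<in> Hp k" shows "(\<lambda>\<xi>. F \<xi> + G \<xi>) \<in> Hp k"
proof -
  obtain c d where c: "\<And>\<xi>. F \<xi> = hpoly_eval k c \<xi>" and d: "\<And>\<xi>. G \<xi> = hpoly_eval k d \<xi>"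
    using assms unfolding Hp_def by blast
  show ?thesis
    by (rule HpI[of _ _ "\<lambda>a. c a + d a"]) (simp add: c d hpoly_eval_def sum.distrib algebra_simps)
qed

lemma Hp_scale: assumes "F \<in> Hp k" shows "(\<lambda>\<xi>. complex_of_real r * F \<xi>) \<in> Hp k"
proof -
  obtain c where c: "\<And>\<xi>. F \<xi> = hpoly_eval k c \<xi>"
    using assms unfolding Hp_def by blast
  show ?thesis
    by (rule HpI[of _ _ "\<lambda>a. r * c a"]) (simp add: c hpoly_eval_def sum_distrib_left algebra_simps)
qed

lemma Hp_one: "((\<lambda>_. 1) :: ('d::finite \<Rightarrow> complex) \<Rightarrow> complex) \<in> Hp 0"
proof -
  have h: "hmonos 0 = {(\<lambda>_. 0) :: 'd \<Rightarrow> nat}"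
    by (auto simp: hmonos_def)
  show ?thesis
    by (rule HpI[of _ _ "\<lambda>_. 1"]) (simp add: hpoly_eval_def h)
qed

lemma Hp_mult: fixes F G :: "('d::finite \<Rightarrow> complex) \<Rightarrow> complex" assumes "F \<in> Hp a" "G \<in> Hp b" shows "(\<lambda>\<xi>. F \<xi> * G \<xi>) \<in> Hp (a + b)"
proof -
  obtain c d where c: "\<And>\<xi>. F \<xi> = hpoly_eval a c \<xi>" and d: "\<And>\<xi>. G \<xi> = hpoly_eval b d \<xi>"
    using assms unfolding Hp_def by blast
  define S where "S = (hmonos a :: ('d \<Rightarrow> nat) set) \<times> (hmonos b :: ('d \<Rightarrow> nat) set)"
  define e where "e = (\<lambda>\<gamma>. \<Sum>p\<in>{p. p \<in> S \<and> (\<lambda>l::'d. fst p l + snd p l) = \<gamma>}. c (fst p) * d (snd p))"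
  have fS: "finite S" unfolding S_def using finite_hmonos by blast
  have img: "(\<lambda>p. (\<lambda>l::'d. fst p l + snd p l)) ` S \<subseteq> hmonos (a+b)"
    by (auto simp: S_def hmonos_def sum.distrib)
  show ?thesis
  proof (rule HpI[of _ _ e])
    fix \<xi> :: "'d \<Rightarrow> complex"
    let ?m = "\<lambda>\<gamma>. (\<Prod>l\<in>UNIV. \<xi> l ^ \<gamma> l)"
    let ?h = "\<lambda>p. complex_of_real (c (fst p) * d (snd p)) * ?m ((\<lambda>l::'d. fst p l + snd p l))"
    have "F \<xi> * G \<xi> = (\<Sum>\<alpha>\<in>hmonos a. \<Sum>\<beta>\<in>hmonos b. (complex_of_real (c \<alpha>) * ?m \<alpha>) * (complex_of_real (d \<beta>) * ?m \<beta>))"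
      by (simp add: c d hpoly_eval_def sum_product)
    also have "\<dots> = (\<Sum>\<alpha>\<in>hmonos a. \<Sum>\<beta>\<in>hmonos b. ?h (\<alpha>, \<beta>))"
      by (simp add: power_add prod.distrib algebra_simps)
    also have "\<dots> = sum ?h S"
      unfolding S_def by (simp add: sum.cartesian_product split_def)
    also have "\<dots> = (\<Sum>\<gamma>\<in>hmonos (a+b). sum ?h {p. p \<in> S \<and> (\<lambda>l::'d. fst p l + snd p l) = \<gamma>})"
      by (rule sum.group[symmetric, OF fS finite_hmonos img])
    also have "\<dots> = hpoly_eval (a+b) e \<xi>"
      unfolding hpoly_eval_def e_def
      apply (rule sum.cong[OF refl])
      apply (simp add: sum_distrib_right)
      apply (rule sum.cong)
       apply auto
      done
    finally show "F \<xi> * G \<xi> = hpoly_eval (a + b) e \<xi>" .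
  qed
qed

lemma Hp_sum: assumes "finite S" "\<And>i. i \<in> S \<Longrightarrow> F i \<in> Hp k"
  shows "(\<lambda>\<xi>. \<Sum>i\<in>S. F i \<xi>) \<in> Hp k"
  using assms by (induction S rule: finite_induct) (auto intro: Hp_zero Hp_add)

lemma Hp_prod: assumes "\<And>i. i < r \<Longrightarrow> F i \<in> Hp k"
  shows "(\<lambda>\<xi>. \<Prod>i<r. F i \<xi>) \<in> Hp (r * k)"
  using assms
proof (induction r)
  case 0 then show ?case using Hp_one by simp
next
  case (Suc r)
  have "(\<lambda>\<xi>. (\<Prod>i<r. F i \<xi>) * F r \<xi>) \<in> Hp (r * k + k)"
    by (rule Hp_mult) (use Suc in auto)
  then show ?case by (simp add: add.commute)
qed

lemma Hp_det: assumes "\<And>\<xi>. M \<xi> \<in> carrier_mat r r"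
  and "\<And>i j. i < r \<Longrightarrow> j < r \<Longrightarrow> (\<lambda>\<xi>. M \<xi> $$ (i,j)) \<in> Hp k"
  shows "(\<lambda>\<xi>. det (M \<xi>)) \<in> Hp (r * k)"
proof -
  have "(\<lambda>\<xi>. \<Sum>p\<in>{p. p permutes {0..<r}}. complex_of_real (of_int (sign p)) * (\<Prod>i<r. M \<xi> $$ (i, p i))) \<in> Hp (r*k)"
  proof (rule Hp_sum)
    show "finite {p. p permutes {0..<r}}" by (simp add: finite_permutations)
    fix p assume p: "p \<in> {p. p permutes {0..<r}}"
    have "(\<lambda>\<xi>. \<Prod>i<r. M \<xi> $$ (i, p i)) \<in> Hp (r*k)"
    proof (rule Hp_prod)
      fix i assume "i < r"
      then have "p i < r" using p by (simp add: permutes_in_image)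
      then show "(\<lambda>\<xi>. M \<xi> $$ (i, p i)) \<in> Hp k" using assms(2) \<open>i < r\<close> by blast
    qed
    then show "(\<lambda>\<xi>. complex_of_real (of_int (sign p)) * (\<Prod>i<r. M \<xi> $$ (i, p i))) \<in> Hp (r*k)"
      by (rule Hp_scale)
  qed
  moreover have "det (M \<xi>) = (\<Sum>p\<in>{p. p permutes {0..<r}}. complex_of_real (of_int (sign p)) * (\<Prod>i<r. M \<xi> $$ (i, p i)))" for \<xi>
    using assms(1)[of \<xi>] unfolding det_def by (simp add: atLeast0LessThan)
  ultimately show ?thesis by simp
qed

definition sel :: "'a mat \<Rightarrow> nat \<Rightarrow> (nat \<Rightarrow> nat) \<Rightarrow> (nat \<Rightarrow> nat) \<Rightarrow> 'a mat" where
  "sel M s f g = mat s s (\<lambda>(a,b). M $$ (f a, g b))"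

lemma sel_carrier[simp]: "sel M s f g \<in> carrier_mat s s"
  by (simp add: sel_def)

lemma sel_dims[simp]: "dim_row (sel M s f g) = s" "dim_col (sel M s f g) = s"
  by (simp_all add: sel_def)

lemma sel_index[simp]: "a < s \<Longrightarrow> b < s \<Longrightarrow> sel M s f g $$ (a,b) = M $$ (f a, g b)"
  by (simp add: sel_def)

definition kv :: "'a::comm_ring_1 mat \<Rightarrow> nat \<Rightarrow> (nat \<Rightarrow> nat) \<Rightarrow> (nat \<Rightarrow> nat) \<Rightarrow> 'a vec" where
  "kv M s f g = vec (dim_col M) (\<lambda>c. \<Sum>b<Suc s. if g b = c then cofactor (sel M (Suc s) f g) s b else 0)"

lemma kv_dim[simp]: "dim_vec (kv M s f g) = dim_col M"
  by (simp add: kv_def)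

lemma cofactor_sel_upd:
  "cofactor (sel M (Suc s) (f(s:=i)) g) s b = cofactor (sel M (Suc s) f g) s b"
proof -
  have "mat_delete (sel M (Suc s) (f(s:=i)) g) s b = mat_delete (sel M (Suc s) f g) s b"
    by (rule eq_matI) (auto simp: mat_delete_def sel_def)
  then show ?thesis by (simp add: cofactor_def)
qed

lemma kv_mult:
  assumes M: "M \<in> carrier_mat m n" and g: "\<And>b. b < Suc s \<Longrightarrow> g b < n" and i: "i < m"
  shows "(M *\<^sub>v kv M s f g) $ i = det (sel M (Suc s) (f(s:=i)) g)"
proof -
  let ?y = "\<lambda>b. cofactor (sel M (Suc s) f g) s b"
  have "(M *\<^sub>v kv M s f g) $ i = (\<Sum>c<n. M $$ (i,c) * (\<Sum>b<Suc s. if g b = c then ?y b else 0))"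
    using M i by (auto simp: kv_def scalar_prod_def atLeast0LessThan intro!: sum.cong)
  also have "\<dots> = (\<Sum>c<n. \<Sum>b<Suc s. if g b = c then M $$ (i, g b) * ?y b else 0)"
    apply (rule sum.cong[OF refl])
    apply (subst sum_distrib_left)
    apply (rule sum.cong[OF refl])
    by auto
  also have "\<dots> = (\<Sum>b<Suc s. \<Sum>c<n. if g b = c then M $$ (i, g b) * ?y b else 0)"
    by (rule sum.swap)
  also have "\<dots> = (\<Sum>b<Suc s. M $$ (i, g b) * ?y b)"
    using g by (auto intro!: sum.cong)
  also have "\<dots> = (\<Sum>b<Suc s. sel M (Suc s) (f(s:=i)) g $$ (s,b) * cofactor (sel M (Suc s) (f(s:=i)) g) s b)"
    by (auto simp: cofactor_sel_upd intro!: sum.cong)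
  also have "\<dots> = det (sel M (Suc s) (f(s:=i)) g)"
    by (rule laplace_expansion_row[symmetric]) auto
  finally show ?thesis .
qed

lemma kv_kernel:
  assumes M: "M \<in> carrier_mat m n" and g: "\<And>b. b < Suc s \<Longrightarrow> g b < n"
    and z: "\<And>i. i < m \<Longrightarrow> det (sel M (Suc s) (f(s:=i)) g) = 0"
  shows "M *\<^sub>v kv M s f g = 0\<^sub>v m"
  by (rule eq_vecI) (use M kv_mult[OF M g] z in auto)

lemma kv_entry_main:
  assumes M: "M \<in> carrier_mat m n" and j: "j < n" and gj: "j \<notin> g ` {..<s}" and gs: "g s = j"
  shows "kv M s f g $ j = det (sel M s f g)"
proof -
  have "kv M s f g $ j = (\<Sum>b<Suc s. if g b = j then cofactor (sel M (Suc s) f g) s b else 0)"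
    using M j by (simp add: kv_def)
  also have "\<dots> = (\<Sum>b<Suc s. if b = s then cofactor (sel M (Suc s) f g) s b else 0)"
    using gj gs by (intro sum.cong refl) (auto simp: less_Suc_eq, metis imageI lessThan_iff)
  also have "\<dots> = cofactor (sel M (Suc s) f g) s s" by simp
  also have "mat_delete (sel M (Suc s) f g) s s = sel M s f g"
    by (rule eq_matI) (auto simp: mat_delete_def sel_def)
  then have "cofactor (sel M (Suc s) f g) s s = det (sel M s f g)"
    by (simp add: cofactor_def)
  finally show ?thesis .
qed

lemma kv_entry_zero:
  assumes M: "M \<in> carrier_mat m n" and c: "c < n" and gc: "c \<notin> g ` {..s}"
  shows "kv M s f g $ c = 0"
proof -
  have "kv M s f g $ c = (\<Sum>b<Suc s. if g b = c then cofactor (sel M (Suc s) f g) s b else 0)"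
    using M c by (simp add: kv_def)
  also have "\<dots> = 0" using gc by (intro sum.neutral) (auto simp: less_Suc_eq_le)
  finally show ?thesis .
qed

lemma sel_det_rank:
  fixes M :: "'a::field mat"
  assumes M: "M \<in> carrier_mat m n" and f: "\<And>a. a < s \<Longrightarrow> f a < m" and g: "\<And>b. b < s \<Longrightarrow> g b < n"
    and d: "det (sel M s f g) \<noteq> 0"
  shows "s \<le> vec_space.rank m M"
proof -
  define C where "C = mat_of_cols m (map (\<lambda>b. col M (g b)) [0..<s])"
  have colsC: "cols C = map (\<lambda>b. col M (g b)) [0..<s]"
    unfolding C_def by (rule cols_mat_of_cols) (use M in auto)
  have Cc: "C \<in> carrier_mat m s" unfolding C_def by (metis length_map length_upt minus_nat.diff_0 mat_of_cols_carrier(1))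
  have Cidx: "C $$ (i, b) = M $$ (i, g b)" if "i < m" "b < s" for i b
    using that M g unfolding C_def mat_of_cols_def by auto
  have dist: "distinct (cols C)"
  proof (rule ccontr)
    assume "\<not> distinct (cols C)"
    then obtain b1 b2 where b: "b1 < s" "b2 < s" "b1 \<noteq> b2" "col M (g b1) = col M (g b2)"
      unfolding colsC distinct_conv_nth by auto
    have "col (sel M s f g) b1 = col (sel M s f g) b2"
    proof (rule eq_vecI)
      fix a assume "a < dim_vec (col (sel M s f g) b2)"
      then have a: "a < s" by simp
      have "M $$ (f a, g b1) = col M (g b1) $ f a" using M f[OF a] g[OF b(1)] by simp
      also have "\<dots> = M $$ (f a, g b2)" using b(4) M f[OF a] g[OF b(2)] by simp
      finally show "col (sel M s f g) b1 $ a = col (sel M s f g) b2 $ a" using a b by simp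
    qed simp
    then have "det (sel M s f g) = 0"
      by (intro det_identical_cols[OF sel_carrier b(3) b(1) b(2)])
    with d show False by simp
  qed
  have indep: "module.lin_indpt class_ring (module_vec TYPE('a) m) (set (cols C))"
  proof
    assume "module.lin_dep class_ring (module_vec TYPE('a) m) (set (cols C))"
    then obtain v where v: "v \<in> carrier_vec s" "v \<noteq> 0\<^sub>v s" "C *\<^sub>v v = 0\<^sub>v m"
      using vec_space.lin_depE[OF Cc _ dist] by blast
    have "sel M s f g *\<^sub>v v = 0\<^sub>v s"
    proof (rule eq_vecI)
      fix a assume "a < dim_vec (0\<^sub>v s :: 'a vec)"
      then have a: "a < s" by simp
      have "(sel M s f g *\<^sub>v v) $ a = (\<Sum>b<s. M $$ (f a, g b) * v $ b)"
        using a v(1) by (auto simp: scalar_prod_def atLeast0LessThan intro!: sum.cong)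
      also have "\<dots> = (C *\<^sub>v v) $ f a"
        using a v(1) Cc f[OF a] Cidx[OF f[OF a]] by (auto simp: scalar_prod_def atLeast0LessThan intro!: sum.cong)
      also have "\<dots> = 0" using v(3) f[OF a] by simp
      finally show "(sel M s f g *\<^sub>v v) $ a = 0\<^sub>v s $ a" using a by simp
    qed simp
    then have "det (sel M s f g) = 0"
      using det_0_iff_vec_prod_zero_field[OF sel_carrier] v by blast
    with d show False by simp
  qed
  have sub: "set (cols C) \<subseteq> set (cols M)"
    unfolding colsC using M g by (auto simp: cols_def)
  have "card (set (cols C)) \<le> vec_space.rank m M"
    by (rule vec_space.rank_ge_card_indpt[OF M sub indep])
  moreover have "card (set (cols C)) = s"
    using distinct_card[OF dist] colsC by simp
  ultimately show ?thesis by simp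
qed

lemma (in vec_space) max_indep_exists:
  obtains S where "maximal S (\<lambda>T. T \<subseteq> set (cols A) \<and> lin_indpt T)"
  using maximal_exists[of "(\<lambda>T. T \<subseteq> set (cols A) \<and> lin_indpt T)" "card (set (cols A))" "{}"]
  by (meson List.finite_set card_mono empty_iff empty_subsetI finite_lin_indpt2 rev_finite_subset)

lemma (in vec_space) cols_in_span_max:
  assumes A: "A \<in> carrier_mat n nc" and S: "maximal S (\<lambda>T. T \<subseteq> set (cols A) \<and> lin_indpt T)"
  shows "set (cols A) \<subseteq> span S"
proof
  fix c assume c: "c \<in> set (cols A)"
  have SA: "S \<subseteq> set (cols A)" "lin_indpt S" using S by (auto simp: maximal_def)
  have cc: "set (cols A) \<subseteq> carrier_vec n" using A cols_dim by blast
  show "c \<in> span S"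
  proof (cases "c \<in> S")
    case True then show ?thesis using in_own_span SA cc by blast
  next
    case False
    have "\<not> (S \<union> {c} \<subseteq> set (cols A) \<and> lin_indpt (S \<union> {c}))"
    proof
      assume "S \<union> {c} \<subseteq> set (cols A) \<and> lin_indpt (S \<union> {c})"
      then have "S \<union> {c} = S" using S unfolding maximal_def by blast
      with False show False by blast
    qed
    then have "lin_dep (S \<union> {c})" using SA c by blast
    then show ?thesis using lin_dep_iff_in_span[of S c] SA cc c False by auto
  qed
qed

lemma (in vec_space) rank_le_span:
  assumes A: "A \<in> carrier_mat n nc" and T: "finite T" "T \<subseteq> carrier_vec n"
    and sp: "set (cols A) \<subseteq> span T"
  shows "rank A \<le> card T"
proof -
  obtain S where S: "maximal S (\<lambda>T. T \<subseteq> set (cols A) \<and> lin_indpt T)" by (rule max_indep_exists)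
  have SA: "S \<subseteq> set (cols A)" "lin_indpt S" using S by (auto simp: maximal_def)
  have fS: "finite S" using SA(1) finite_subset by blast
  have "S \<subseteq> span T" using SA sp by blast
  from replacement[OF fS T(1) T(2) SA(2) this] have "card S \<le> card T" by auto
  then show ?thesis using rank_card_indpt[OF A S] by simp
qed

lemma (in vec_space) rank_ge_span:
  assumes A: "A \<in> carrier_mat n nc" and U: "finite U" "lin_indpt U"
    and sp: "U \<subseteq> span (set (cols A))"
  shows "card U \<le> rank A"
proof -
  obtain S where S: "maximal S (\<lambda>T. T \<subseteq> set (cols A) \<and> lin_indpt T)" by (rule max_indep_exists)
  have SA: "S \<subseteq> set (cols A)" "lin_indpt S" using S by (auto simp: maximal_def)
  have fS: "finite S" using SA(1) finite_subset by blast
  have cc: "set (cols A) \<subseteq> carrier_vec n" using A cols_dim by blast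
  have Sc: "S \<subseteq> carrier_vec n" using SA cc by blast
  have "span (set (cols A)) \<subseteq> span S"
    by (rule span_subsetI[OF Sc cols_in_span_max[OF A S]])
  with sp have "U \<subseteq> span S" by blast
  from replacement[OF U(1) fS Sc U(2) this] have "card U \<le> card S" by auto
  then show ?thesis using rank_card_indpt[OF A S] by simp
qed

lemma (in vec_space) indep_by_index:
  assumes Uc: "U \<subseteq> carrier_vec n"
    and idx: "\<And>u. u \<in> U \<Longrightarrow> idx u < n \<and> u $ idx u \<noteq> 0"
    and oth: "\<And>u u'. u \<in> U \<Longrightarrow> u' \<in> U \<Longrightarrow> u' \<noteq> u \<Longrightarrow> u' $ idx u = 0"
  shows "lin_indpt U"
proof
  assume "lin_dep U"
  then obtain A a v where Av: "finite A" "A \<subseteq> U" "lincomb a A = \<zero>\<^bsub>V\<^esub>" "v \<in> A" "a v \<noteq> 0"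
    unfolding lin_dep_def by auto
  have i: "idx v < n" "v $ idx v \<noteq> 0" using idx Av by auto
  have "lincomb a A $ idx v = (\<Sum>x\<in>A. a x * x $ idx v)"
    by (rule lincomb_index[OF i(1)]) (use Av Uc in auto)
  also have "\<dots> = a v * v $ idx v + (\<Sum>x\<in>A-{v}. a x * x $ idx v)"
    by (rule sum.remove[OF Av(1) Av(4)])
  also have "(\<Sum>x\<in>A-{v}. a x * x $ idx v) = 0"
  proof (rule sum.neutral, rule ballI)
    fix x assume "x \<in> A - {v}"
    then have xU: "x \<in> U" and xv: "x \<noteq> v" using Av by auto
    have vU: "v \<in> U" using Av by blast
    have "x $ idx v = 0" by (rule oth[OF vU xU xv])
    then show "a x * x $ idx v = 0" by simp
  qed
  finally have "lincomb a A $ idx v \<noteq> 0" using i Av by simp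
  moreover have "lincomb a A $ idx v = 0" using Av(3) i by simp
  ultimately show False by simp
qed

lemma mult_carrier_row: "A *\<^sub>v (x::'a::comm_ring_1 vec) \<in> carrier_vec (dim_row A)"
  unfolding carrier_vec_def by (rule CollectI, rule dim_mult_mat_vec)

lemma (in vec_space) image_eq_span:
  assumes A: "A \<in> carrier_mat n nc"
  shows "mat_image A = span (set (cols A))"
proof -
  have e: "span (set (cols A)) = {y\<in>carrier_vec (dim_row A). \<exists>x\<in>carrier_vec (dim_col A). A *\<^sub>v x = y}"
    by (rule col_space_eq[OF A, unfolded col_space_def])
  show ?thesis unfolding e
  proof (intro equalityI subsetI)
    fix y assume "y \<in> {y\<in>carrier_vec (dim_row A). \<exists>x\<in>carrier_vec (dim_col A). A *\<^sub>v x = y}"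
    then obtain x where "x \<in> carrier_vec (dim_col A)" "A *\<^sub>v x = y" by blast
    then show "y \<in> mat_image A" unfolding mat_image_def by blast
  next
    fix y assume "y \<in> mat_image A"
    then obtain x where x: "x \<in> carrier_vec (dim_col A)" "y = A *\<^sub>v x" unfolding mat_image_def by blast
    have "A *\<^sub>v x \<in> carrier_vec (dim_row A)" by (rule mult_carrier_row)
    with x show "y \<in> {y\<in>carrier_vec (dim_row A). \<exists>x\<in>carrier_vec (dim_col A). A *\<^sub>v x = y}" by blast
  qed
qed

lemma det_sel_0: "det (sel M 0 f g) = 1"
proof -
  have "sel M 0 f g = 1\<^sub>m 0" by (rule eq_matI) auto
  then show ?thesis by simp
qed

lemma sel_det_inj:
  assumes d: "det (sel M s f g) \<noteq> 0"
  shows "inj_on g {..<s}" "inj_on f {..<s}"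
proof -
  show "inj_on g {..<s}"
  proof
    fix b1 b2 assume b: "b1 \<in> {..<s}" "b2 \<in> {..<s}" "g b1 = g b2"
    show "b1 = b2"
    proof (rule ccontr)
      assume "b1 \<noteq> b2"
      have "col (sel M s f g) b1 = col (sel M s f g) b2"
        by (rule eq_vecI) (use b in auto)
      then have "det (sel M s f g) = 0"
        using det_identical_cols[OF sel_carrier \<open>b1 \<noteq> b2\<close>] b by auto
      with d show False by simp
    qed
  qed
  show "inj_on f {..<s}"
  proof
    fix b1 b2 assume b: "b1 \<in> {..<s}" "b2 \<in> {..<s}" "f b1 = f b2"
    show "b1 = b2"
    proof (rule ccontr)
      assume "b1 \<noteq> b2"
      have "row (sel M s f g) b1 = row (sel M s f g) b2"
        by (rule eq_vecI) (use b in auto)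
      then have "det (sel M s f g) = 0"
        using det_identical_rows[OF sel_carrier \<open>b1 \<noteq> b2\<close>] b by auto
      with d show False by simp
    qed
  qed
qed

lemma supp_sum:
  fixes h :: "nat \<Rightarrow> 'a::comm_ring_1" and s :: nat
  assumes g: "inj_on g {..<s}" "g ` {..<s} \<subseteq> {..<n}"
    and z: "\<And>c. c < n \<Longrightarrow> c \<notin> g ` {..<s} \<Longrightarrow> h c = 0"
  shows "(\<Sum>c<n. h c) = (\<Sum>b<s. h (g b))"
proof -
  have "(\<Sum>c<n. h c) = (\<Sum>c\<in>g ` {..<s}. h c)"
    by (rule sum.mono_neutral_right) (use g z in auto)
  also have "\<dots> = (\<Sum>b<s. h (g b))" by (rule sum.reindex[OF g(1), unfolded comp_def])
  finally show ?thesis .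
qed

lemma supp_sum1:
  fixes h :: "nat \<Rightarrow> 'a::comm_ring_1" and s :: nat
  assumes g: "inj_on g {..<s}" "g ` {..<s} \<subseteq> {..<n}" and j: "j < n" "j \<notin> g ` {..<s}"
    and z: "\<And>c. c < n \<Longrightarrow> c \<notin> g ` {..<s} \<Longrightarrow> c \<noteq> j \<Longrightarrow> h c = 0"
  shows "(\<Sum>c<n. h c) = h j + (\<Sum>b<s. h (g b))"
proof -
  have "(\<Sum>c<n. h c) = (\<Sum>c\<in>insert j (g ` {..<s}). h c)"
    by (rule sum.mono_neutral_right) (use g z j in auto)
  also have "\<dots> = h j + (\<Sum>c\<in>g ` {..<s}. h c)" using j by (subst sum.insert) (auto intro: finite_imageI)
  also have "(\<Sum>c\<in>g ` {..<s}. h c) = (\<Sum>b<s. h (g b))" by (rule sum.reindex[OF g(1), unfolded comp_def])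
  finally show ?thesis .
qed

definition minor_data :: "'a::field mat \<Rightarrow> nat \<Rightarrow> nat \<Rightarrow> nat \<Rightarrow> (nat \<Rightarrow> nat) \<Rightarrow> (nat \<Rightarrow> nat) \<Rightarrow> bool" where
  "minor_data M m n s f g \<longleftrightarrow> M \<in> carrier_mat m n \<and> (\<forall>a<s. f a < m) \<and> (\<forall>b<s. g b < n)
     \<and> det (sel M s f g) \<noteq> 0
     \<and> (\<forall>f' g'. (\<forall>a<Suc s. f' a < m) \<longrightarrow> (\<forall>b<Suc s. g' b < n) \<longrightarrow> det (sel M (Suc s) f' g') = 0)"

lemma sel_transpose:
  assumes M: "M \<in> carrier_mat m n" and f: "\<And>a. a < s \<Longrightarrow> f a < m" and g: "\<And>b. b < s \<Longrightarrow> g b < n"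
  shows "sel (transpose_mat M) s g f = transpose_mat (sel M s f g)"
  by (rule eq_matI) (use M f g in auto)

lemma det_sel_transpose:
  assumes M: "M \<in> carrier_mat m n" and f: "\<And>a. a < s \<Longrightarrow> f a < m" and g: "\<And>b. b < s \<Longrightarrow> g b < n"
  shows "det (sel (transpose_mat M) s g f) = det (sel M s f g)"
proof -
  have "sel (transpose_mat M) s g f = transpose_mat (sel M s f g)" by (rule sel_transpose[OF M f g])
  moreover have "det (transpose_mat (sel M s f g)) = det (sel M s f g)" by (rule det_transpose[OF sel_carrier])
  ultimately show ?thesis by simp
qed

lemma minor_data_transpose:
  assumes "minor_data M m n s f g"
  shows "minor_data (transpose_mat M) n m s g f"
proof -
  have M: "M \<in> carrier_mat m n" using assms by (simp add: minor_data_def)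
  show ?thesis
    using assms unfolding minor_data_def
    by (auto simp: det_sel_transpose[OF M])
qed

lemma minor_data_inj:
  assumes "minor_data M m n s f g"
  shows "inj_on g {..<s}" "inj_on f {..<s}"
  using sel_det_inj assms unfolding minor_data_def by blast+

locale minor =
  fixes M :: "'a::field mat" and m n s f g
  assumes md: "minor_data M m n s f g"
begin

definition "D = det (sel M s f g)"
definition "G = g ` {..<s}"
definition "w j = kv M s f (g(s:=j))"
definition "J = {j. j < n \<and> j \<notin> G}"

lemma M: "M \<in> carrier_mat m n" and fb: "\<And>a. a < s \<Longrightarrow> f a < m" and gb: "\<And>b. b < s \<Longrightarrow> g b < n"
  and D0: "D \<noteq> 0"
  and Z: "\<And>f' g'. (\<And>a. a<Suc s \<Longrightarrow> f' a < m) \<Longrightarrow> (\<And>b. b<Suc s \<Longrightarrow> g' b < n) \<Longrightarrow> det (sel M (Suc s) f' g') = 0"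
  using md unfolding minor_data_def D_def by auto

lemma ginj: "inj_on g {..<s}" and finj: "inj_on f {..<s}"
  using minor_data_inj[OF md] by auto

lemma Gsub: "G \<subseteq> {..<n}" using gb unfolding G_def by auto

lemma finJ: "finite J" unfolding J_def by auto

lemma w_dim: "w j \<in> carrier_vec n"
  using M unfolding w_def carrier_vec_def by simp

lemma img_upd: "(g(s:=j)) ` {..<s} = G"
  unfolding G_def by (auto simp: image_def)

lemma w_kernel: assumes j: "j < n" shows "M *\<^sub>v w j = 0\<^sub>v m"
  unfolding w_def
proof (rule kv_kernel[OF M])
  show "(g(s := j)) b < n" if "b < Suc s" for b using that j gb by (auto simp: less_Suc_eq)
  show "det (sel M (Suc s) (f(s := i)) (g(s := j))) = 0" if "i < m" for i
    by (rule Z) (use that j gb fb in \<open>auto simp: less_Suc_eq\<close>)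
qed

lemma w_main: assumes j: "j \<in> J" shows "w j $ j = D"
proof -
  have j': "j < n" "j \<notin> (g(s:=j)) ` {..<s}" using j img_upd unfolding J_def by auto
  have "w j $ j = det (sel M s f (g(s:=j)))"
    unfolding w_def by (rule kv_entry_main[OF M j'(1) j'(2)]) simp
  also have "sel M s f (g(s:=j)) = sel M s f g" by (rule eq_matI) auto
  finally show ?thesis by (simp add: D_def)
qed

lemma w_zero: assumes j: "j < n" and c: "c < n" "c \<notin> G" "c \<noteq> j" shows "w j $ c = 0"
proof -
  have "c \<notin> (g(s:=j)) ` {..s}" using c unfolding G_def by (auto simp: image_def le_less)
  then show ?thesis unfolding w_def by (rule kv_entry_zero[OF M c(1)])
qed

lemma mult_idx: assumes "v \<in> carrier_vec n" "i < m" shows "(M *\<^sub>v v) $ i = (\<Sum>c<n. M $$ (i,c) * v $ c)"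
  using assms M by (auto simp: scalar_prod_def atLeast0LessThan intro!: sum.cong)

lemma kernel_span:
  assumes v: "v \<in> carrier_vec n" and Mv: "M *\<^sub>v v = 0\<^sub>v m" and c: "c < n"
  shows "D * v $ c = (\<Sum>j\<in>J. v $ j * w j $ c)"
proof -
  define u where "u = vec n (\<lambda>c. D * v $ c - (\<Sum>j\<in>J. v $ j * w j $ c))"
  have uc: "u \<in> carrier_vec n" unfolding u_def by simp
  have uJ: "u $ c = 0" if c: "c \<in> J" for c
  proof -
    have cn: "c < n" using c unfolding J_def by auto
    have "(\<Sum>j\<in>J. v $ j * w j $ c) = v $ c * w c $ c + (\<Sum>j\<in>J-{c}. v $ j * w j $ c)"
      by (rule sum.remove[OF finJ c])
    also have "(\<Sum>j\<in>J-{c}. v $ j * w j $ c) = 0"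
    proof (rule sum.neutral, rule ballI)
      fix j assume "j \<in> J - {c}"
      then have "j < n" "c \<noteq> j" unfolding J_def by auto
      moreover have "c \<notin> G" using c unfolding J_def by auto
      ultimately show "v $ j * w j $ c = 0" using w_zero cn by simp
    qed
    finally show ?thesis unfolding u_def using cn w_main[OF c] by simp
  qed
  have Mu: "(M *\<^sub>v u) $ i = 0" if i: "i < m" for i
  proof -
    have "(M *\<^sub>v u) $ i = (\<Sum>c<n. M $$ (i,c) * (D * v $ c - (\<Sum>j\<in>J. v $ j * w j $ c)))"
      using mult_idx[OF uc i] unfolding u_def by simp
    also have "\<dots> = D * (\<Sum>c<n. M $$ (i,c) * v $ c) - (\<Sum>c<n. \<Sum>j\<in>J. v $ j * (M $$ (i,c) * w j $ c))"
      by (simp add: sum_subtractf sum_distrib_left algebra_simps)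
    also have "(\<Sum>c<n. \<Sum>j\<in>J. v $ j * (M $$ (i,c) * w j $ c)) = (\<Sum>j\<in>J. v $ j * (\<Sum>c<n. M $$ (i,c) * w j $ c))"
      by (subst sum.swap) (simp add: sum_distrib_left)
    also have "\<dots> = 0"
    proof (rule sum.neutral, rule ballI)
      fix j assume "j \<in> J"
      then have "j < n" unfolding J_def by auto
      then have "(M *\<^sub>v w j) $ i = 0" using w_kernel i by simp
      then show "v $ j * (\<Sum>c<n. M $$ (i,c) * w j $ c) = 0" using mult_idx[OF w_dim i] by simp
    qed
    also have "(\<Sum>c<n. M $$ (i,c) * v $ c) = 0" using mult_idx[OF v i] Mv i by simp
    finally show ?thesis by simp
  qed
  have uG: "u $ c = 0" if "c < n" "c \<notin> G" for c using uJ that unfolding J_def by auto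
  have sel0: "sel M s f g *\<^sub>v vec s (\<lambda>b. u $ g b) = 0\<^sub>v s"
  proof (rule eq_vecI)
    fix a assume "a < dim_vec (0\<^sub>v s :: 'a vec)"
    then have a: "a < s" by simp
    have "(sel M s f g *\<^sub>v vec s (\<lambda>b. u $ g b)) $ a = (\<Sum>b<s. M $$ (f a, g b) * u $ g b)"
      using a by (auto simp: scalar_prod_def atLeast0LessThan intro!: sum.cong)
    also have "\<dots> = (\<Sum>c<n. M $$ (f a, c) * u $ c)"
      by (rule supp_sum[OF ginj Gsub[unfolded G_def], symmetric]) (use uG in \<open>auto simp: G_def\<close>)
    also have "\<dots> = 0" using Mu[OF fb[OF a]] mult_idx[OF uc fb[OF a]] by simp
    finally show "(sel M s f g *\<^sub>v vec s (\<lambda>b. u $ g b)) $ a = 0\<^sub>v s $ a" using a by simp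
  qed simp
  have "vec s (\<lambda>b. u $ g b) = 0\<^sub>v s"
  proof (rule ccontr)
    assume "vec s (\<lambda>b. u $ g b) \<noteq> 0\<^sub>v s"
    then have "det (sel M s f g) = 0"
      using det_0_iff_vec_prod_zero_field[OF sel_carrier] sel0 by (meson vec_carrier)
    with D0 show False by (simp add: D_def)
  qed
  then have ug: "u $ g b = 0" if "b < s" for b using that by (metis index_vec index_zero_vec(1))
  have "u $ c = 0"
  proof (cases "c \<in> G")
    case True then obtain b where "b < s" "c = g b" unfolding G_def by auto
    then show ?thesis using ug by simp
  next
    case False then show ?thesis using uG c by simp
  qed
  then show ?thesis unfolding u_def using c by simp
qed

end

lemma (in vec_space) mat_of_cols_in_span:
  assumes ws: "set ws \<subseteq> carrier_vec n"
  shows "mat_of_cols n ws *\<^sub>v vec (length ws) c \<in> span (set ws)"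
proof -
  have "lincomb_list c ws = mat_of_cols n ws *\<^sub>v vec (length ws) c"
    by (rule lincomb_list_as_mat_mult) (use ws in auto)
  moreover have "lincomb_list c ws \<in> span_list ws"
    by (rule in_span_listI) auto
  ultimately show ?thesis using span_list_as_span[OF ws] by simp
qed

lemma (in vec_space) own_span: "X \<subseteq> carrier_vec n \<Longrightarrow> x \<in> X \<Longrightarrow> x \<in> span X"
  using in_own_span by blast

lemma mat_of_cols_idx:
  assumes "\<And>i. i < length ws \<Longrightarrow> ws ! i \<in> carrier_vec n" "r < n"
  shows "(mat_of_cols n ws *\<^sub>v vec (length ws) c) $ r = (\<Sum>i<length ws. ws ! i $ r * c i)"
  using assms by (auto simp: mat_of_cols_def scalar_prod_def atLeast0LessThan intro!: sum.cong)

context minor begin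

lemma Dne: "det (sel M s f g) \<noteq> 0" using D0 unfolding D_def .

lemma col_in_span: assumes j: "j < n"
  shows "col M j \<in> LinearCombinations.module.span class_ring (module_vec TYPE('a) m) ((\<lambda>b. col M (g b)) ` {..<s})"
proof -
  define ws where "ws = map (\<lambda>b. col M (g b)) [0..<s]"
  have ws: "set ws \<subseteq> carrier_vec m" unfolding ws_def using M by auto
  have sws: "set ws = (\<lambda>b. col M (g b)) ` {..<s}" unfolding ws_def by auto
  show ?thesis
  proof (cases "j \<in> G")
    case True
    then obtain b where b: "b < s" "j = g b" unfolding G_def by auto
    have "col M j \<in> set ws" using b unfolding ws_def by auto
    then show ?thesis unfolding sws[symmetric] by (rule vec_space.own_span[OF ws])
  next
    case False
    then have jJ: "j \<in> J" using j unfolding J_def by auto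
    define cf where "cf = (\<lambda>b. - (w j $ g b) / D)"
    have "col M j = mat_of_cols m ws *\<^sub>v vec (length ws) cf"
    proof (rule eq_vecI)
      fix i assume "i < dim_vec (mat_of_cols m ws *\<^sub>v vec (length ws) cf)"
      then have i: "i < m" by simp
      have "0 = (M *\<^sub>v w j) $ i" using w_kernel[OF j] i by simp
      also have "\<dots> = (\<Sum>c<n. M $$ (i,c) * w j $ c)" by (rule mult_idx[OF w_dim i])
      also have "\<dots> = M $$ (i,j) * w j $ j + (\<Sum>b<s. M $$ (i, g b) * w j $ g b)"
        by (rule supp_sum1[OF ginj Gsub[unfolded G_def] j False[unfolded G_def]]) (use w_zero j in \<open>auto simp: G_def\<close>)
      finally have eq: "M $$ (i,j) * D = - (\<Sum>b<s. M $$ (i, g b) * w j $ g b)"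
        using w_main[OF jJ] by (simp add: eq_neg_iff_add_eq_0 add.commute)
      have "(mat_of_cols m ws *\<^sub>v vec (length ws) cf) $ i = (\<Sum>b<s. M $$ (i, g b) * cf b)"
        using mat_of_cols_idx[of ws m i cf] ws i M gb unfolding ws_def by auto
      also have "\<dots> = - (\<Sum>b<s. M $$ (i, g b) * w j $ g b) / D"
        unfolding cf_def by (simp add: sum_divide_distrib sum_negf)
      also have "\<dots> = M $$ (i,j)" using eq D0 by (simp add: field_simps)
      finally show "col M j $ i = (mat_of_cols m ws *\<^sub>v vec (length ws) cf) $ i" using i j M by simp
    qed (use M in simp)
    then show ?thesis using vec_space.mat_of_cols_in_span[OF ws] sws by simp
  qed
qed

lemma rank_eq: "vec_space.rank m M = s"
proof (rule antisym)
  have "vec_space.rank m M \<le> card ((\<lambda>b. col M (g b)) ` {..<s})"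
  proof (rule vec_space.rank_le_span[OF M])
    show "set (cols M) \<subseteq> LinearCombinations.module.span class_ring (module_vec TYPE('a) m) ((\<lambda>b. col M (g b)) ` {..<s})"
      using col_in_span M by (auto simp: cols_def)
  qed (use M in auto)
  also have "\<dots> \<le> s" using card_image_le[of "{..<s}"] by simp
  finally show "vec_space.rank m M \<le> s" .
  show "s \<le> vec_space.rank m M"
    by (rule sel_det_rank[OF M fb gb Dne])
qed

lemma card_J: "card J = n - s"
proof -
  have "J = {..<n} - G" unfolding J_def by auto
  moreover have "card G = s" unfolding G_def using card_image[OF ginj] by simp
  ultimately show ?thesis using Gsub by (simp add: card_Diff_subset finite_subset)
qed

lemma w_inj: "inj_on w J"
proof
  fix j1 j2 assume j: "j1 \<in> J" "j2 \<in> J" "w j1 = w j2"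
  show "j1 = j2"
  proof (rule ccontr)
    assume ne: "j1 \<noteq> j2"
    have "w j2 $ j1 = 0" using j ne unfolding J_def by (intro w_zero) auto
    moreover have "w j1 $ j1 = D" by (rule w_main[OF j(1)])
    ultimately show False using j D0 by simp
  qed
qed

lemma kernel_in_span:
  assumes v: "v \<in> mat_kernel M"
  shows "v \<in> LinearCombinations.module.span class_ring (module_vec TYPE('a) n) (w ` J)"
proof -
  have vc: "v \<in> carrier_vec n" and Mv: "M *\<^sub>v v = 0\<^sub>v m" using mat_kernelD[OF M v] by auto
  define js where "js = sorted_list_of_set J"
  have js: "distinct js" "set js = J" unfolding js_def using finJ by auto
  define ws where "ws = map w js"
  have ws: "set ws \<subseteq> carrier_vec n" unfolding ws_def using w_dim by auto
  have sws: "set ws = w ` J" unfolding ws_def using js by auto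
  define cf where "cf = (\<lambda>i. v $ (js ! i) / D)"
  have "v = mat_of_cols n ws *\<^sub>v vec (length ws) cf"
  proof (rule eq_vecI)
    fix c assume "c < dim_vec (mat_of_cols n ws *\<^sub>v vec (length ws) cf)"
    then have c: "c < n" by simp
    have "(mat_of_cols n ws *\<^sub>v vec (length ws) cf) $ c = (\<Sum>i<length js. w (js ! i) $ c * (v $ (js ! i) / D))"
      using mat_of_cols_idx[of ws n c cf] ws c unfolding ws_def cf_def by (auto simp: w_dim)
    also have "\<dots> = (\<Sum>j\<leftarrow>js. w j $ c * (v $ j / D))"
      by (simp add: sum_list_sum_nth atLeast0LessThan)
    also have "\<dots> = (\<Sum>j\<in>J. w j $ c * (v $ j / D))"
    proof -
      have sl: "\<And>h. sum h J = sum_list (map h js)" using sum.distinct_set_conv_list[OF js(1)] js(2) by simp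
      show ?thesis by (simp only: sl)
    qed
    also have "\<dots> = (\<Sum>j\<in>J. v $ j * w j $ c) / D"
      by (simp add: sum_divide_distrib mult.commute)
    also have "\<dots> = v $ c" using kernel_span[OF vc Mv c] D0 by (simp add: field_simps)
    finally show "v $ c = (mat_of_cols n ws *\<^sub>v vec (length ws) cf) $ c" by simp
  qed (use vc in simp)
  then show ?thesis using vec_space.mat_of_cols_in_span[OF ws] sws by simp
qed

lemma w_indep: "module.lin_indpt class_ring (module_vec TYPE('a) n) (w ` J)"
proof (rule vec_space.indep_by_index)
  define idx where "idx = (\<lambda>u. SOME j. j \<in> J \<and> u = w j)"
  have idx: "idx (w j) \<in> J \<and> w (idx (w j)) = w j" if "j \<in> J" for j
    unfolding idx_def by (rule someI2[of _ j]) (use that in auto)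
  have idx2: "idx (w j) = j" if "j \<in> J" for j
    using idx[OF that] w_inj that by (meson inj_onD)
  show "w ` J \<subseteq> carrier_vec n" using w_dim by auto
  show "idx u < n \<and> u $ idx u \<noteq> 0" if "u \<in> w ` J" for u
    using that idx2 w_main D0 unfolding J_def by auto
  show "u' $ idx u = 0" if uu: "u \<in> w ` J" "u' \<in> w ` J" "u' \<noteq> u" for u u'
  proof -
    obtain j1 j2 where j: "j1 \<in> J" "j2 \<in> J" "u = w j1" "u' = w j2" using uu(1,2) by blast
    then have "j1 \<noteq> j2" using uu by auto
    then show ?thesis using j idx2 unfolding J_def by (auto intro!: w_zero)
  qed
qed

end

lemma exists_minor:
  fixes M :: "'a::field mat"
  assumes M: "M \<in> carrier_mat m n"
  shows "\<exists>f g. minor_data M m n (vec_space.rank m M) f g"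
proof -
  define P where "P = (\<lambda>s. \<exists>f g. (\<forall>a<s. f a < m) \<and> (\<forall>b<s. g b < n) \<and> det (sel M s f g) \<noteq> 0)"
  have P0: "P 0" unfolding P_def using det_sel_0 by auto
  have Pb: "y \<le> n" if Py: "P y" for y
  proof -
    obtain f g where "\<forall>a<y. f a < m" "\<forall>b<y. g b < n" "det (sel M y f g) \<noteq> 0" using Py unfolding P_def by blast
    then have "y \<le> vec_space.rank m M" using sel_det_rank[OF M] by blast
    also have "\<dots> \<le> n" using vec_space.rank_le_nc[OF M] .
    finally show ?thesis .
  qed
  define s where "s = Greatest P"
  have Ps: "P s" unfolding s_def by (rule GreatestI_nat[of P 0 n, OF P0 Pb])
  have nP: "\<not> P (Suc s)"
  proof
    assume "P (Suc s)"
    then have "Suc s \<le> s" unfolding s_def by (rule Greatest_le_nat[of P _ n, OF _ Pb])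
    then show False by simp
  qed
  obtain f g where fg: "\<forall>a<s. f a < m" "\<forall>b<s. g b < n" "det (sel M s f g) \<noteq> 0" using Ps unfolding P_def by blast
  have md: "minor_data M m n s f g"
    unfolding minor_data_def using M fg nP unfolding P_def by blast
  then have "vec_space.rank m M = s" by (rule minor.rank_eq[unfolded minor_def])
  then show ?thesis using md by auto
qed

lemma rank_sum:
  fixes A B :: "'a::field mat"
  assumes A: "A \<in> carrier_mat m n" and B: "B \<in> carrier_mat n p"
    and ex: "mat_image B = mat_kernel A"
  shows "vec_space.rank n B + vec_space.rank m A = n"
proof -
  obtain f g where md: "minor_data A m n (vec_space.rank m A) f g" using exists_minor[OF A] by blast
  interpret minor A m n "vec_space.rank m A" f g by (rule minor.intro[OF md])
  have colsB: "set (cols B) \<subseteq> mat_image B"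
  proof
    fix c assume c: "c \<in> set (cols B)"
    have "set (cols B) \<subseteq> carrier_vec n" using B cols_dim by blast
    then show "c \<in> mat_image B" unfolding vec_space.image_eq_span[OF B] using vec_space.own_span c by blast
  qed
  have wk: "w ` J \<subseteq> mat_kernel A"
  proof
    fix u assume "u \<in> w ` J"
    then obtain j where j: "j \<in> J" "u = w j" by blast
    then have "j < n" unfolding J_def by auto
    then show "u \<in> mat_kernel A" using j w_kernel w_dim mat_kernelI[OF A] by blast
  qed
  have le: "vec_space.rank n B \<le> card (w ` J)"
  proof (rule vec_space.rank_le_span[OF B])
    show "finite (w ` J)" using finJ by blast
    show "w ` J \<subseteq> carrier_vec n" using w_dim by blast
    show "set (cols B) \<subseteq> LinearCombinations.module.span class_ring (module_vec TYPE('a) n) (w ` J)"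
      using colsB ex kernel_in_span by blast
  qed
  have ge: "card (w ` J) \<le> vec_space.rank n B"
  proof (rule vec_space.rank_ge_span[OF B])
    show "finite (w ` J)" using finJ by blast
    show "LinearCombinations.module.lin_indpt class_ring (module_vec TYPE('a) n) (w ` J)" by (rule w_indep)
    show "w ` J \<subseteq> LinearCombinations.module.span class_ring (module_vec TYPE('a) n) (set (cols B))"
      using wk ex vec_space.image_eq_span[OF B] by blast
  qed
  have "card (w ` J) = n - vec_space.rank m A" using card_image[OF w_inj] card_J by simp
  moreover have "vec_space.rank m A \<le> n" using vec_space.rank_le_nc[OF A] .
  ultimately show ?thesis using le ge by simp
qed

lemma smult_one_mult_vec:
  fixes y :: "'a::comm_ring_1 vec"
  assumes y: "y \<in> carrier_vec s"
  shows "(c \<cdot>\<^sub>m 1\<^sub>m s) *\<^sub>v y = c \<cdot>\<^sub>v y"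
proof (rule eq_vecI)
  fix i assume "i < dim_vec (c \<cdot>\<^sub>v y)"
  then have i: "i < s" using y by simp
  have "((c \<cdot>\<^sub>m 1\<^sub>m s) *\<^sub>v y) $ i = (\<Sum>j\<in>{0..<s}. (if i = j then c else 0) * y $ j)"
    using i y by (auto simp: scalar_prod_def intro!: sum.cong)
  also have "\<dots> = (\<Sum>j\<in>{0..<s}. if i = j then c * y $ j else 0)"
    by (rule sum.cong) auto
  also have "\<dots> = c * y $ i" using i by (simp add: sum.delta)
  finally show "((c \<cdot>\<^sub>m 1\<^sub>m s) *\<^sub>v y) $ i = (c \<cdot>\<^sub>v y) $ i" using i y by simp
qed (use y in simp)

context minor begin

definition "z i = kv (transpose_mat M) s g (f(s:=i))"
definition "JT = {i. i < m \<and> i \<notin> f ` {..<s}}"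

lemma mdT: "minor_data (transpose_mat M) n m s g f" by (rule minor_data_transpose[OF md])

lemma z_props:
  "\<And>i. i \<in> JT \<Longrightarrow> z i $ i = D"
  "\<And>i c. i < m \<Longrightarrow> c < m \<Longrightarrow> c \<notin> f ` {..<s} \<Longrightarrow> c \<noteq> i \<Longrightarrow> z i $ c = 0"
  "\<And>i. i < m \<Longrightarrow> transpose_mat M *\<^sub>v z i = 0\<^sub>v n"
  "\<And>i. z i \<in> carrier_vec m"
proof -
  interpret T: minor "transpose_mat M" n m s g f by (rule minor.intro[OF mdT])
  have zw: "z i = T.w i" for i unfolding z_def T.w_def ..
  have JJ: "JT = T.J" unfolding JT_def T.J_def T.G_def ..
  have DD: "T.D = D" unfolding T.D_def D_def by (rule det_sel_transpose[OF M fb gb])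
  show "\<And>i. i \<in> JT \<Longrightarrow> z i $ i = D" using T.w_main zw JJ DD by simp
  show "\<And>i c. i < m \<Longrightarrow> c < m \<Longrightarrow> c \<notin> f ` {..<s} \<Longrightarrow> c \<noteq> i \<Longrightarrow> z i $ c = 0"
    using T.w_zero zw unfolding T.G_def by simp
  show "\<And>i. i < m \<Longrightarrow> transpose_mat M *\<^sub>v z i = 0\<^sub>v n" using T.w_kernel zw by simp
  show "\<And>i. z i \<in> carrier_vec m" using T.w_dim zw by simp
qed

lemma coker:
  assumes v: "v \<in> carrier_vec m" and orth: "\<And>i. i \<in> JT \<Longrightarrow> z i \<bullet> v = 0"
  shows "v \<in> mat_image M"
proof -
  define S where "S = sel M s f g"
  have Sc: "S \<in> carrier_mat s s" unfolding S_def by simp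
  define y where "y = vec s (\<lambda>a. v $ f a)"
  define x' where "x' = adj_mat S *\<^sub>v y"
  have Sx': "S *\<^sub>v x' = D \<cdot>\<^sub>v y"
  proof -
    have "S *\<^sub>v x' = (S * adj_mat S) *\<^sub>v y"
      unfolding x'_def by (rule assoc_mult_mat_vec[symmetric, OF Sc adj_mat(1)[OF Sc]]) (simp add: y_def)
    also have "S * adj_mat S = D \<cdot>\<^sub>m 1\<^sub>m s" using adj_mat(2)[OF Sc] unfolding S_def D_def .
    also have "(D \<cdot>\<^sub>m 1\<^sub>m s) *\<^sub>v y = D \<cdot>\<^sub>v y" by (rule smult_one_mult_vec) (simp add: y_def)
    finally show ?thesis .
  qed
  define x where "x = vec n (\<lambda>c. \<Sum>b<s. if g b = c then x' $ b / D else 0)"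
  have xc: "x \<in> carrier_vec n" unfolding x_def by simp
  have Mx: "(M *\<^sub>v x) $ i = (\<Sum>b<s. M $$ (i, g b) * x' $ b) / D" if i: "i < m" for i
  proof -
    have "(M *\<^sub>v x) $ i = (\<Sum>c<n. M $$ (i,c) * (\<Sum>b<s. if g b = c then x' $ b / D else 0))"
      using mult_idx[OF xc i] unfolding x_def by simp
    also have "\<dots> = (\<Sum>c<n. \<Sum>b<s. if g b = c then M $$ (i, g b) * x' $ b / D else 0)"
      apply (rule sum.cong[OF refl])
      apply (subst sum_distrib_left)
      apply (rule sum.cong[OF refl])
      by auto
    also have "\<dots> = (\<Sum>b<s. \<Sum>c<n. if g b = c then M $$ (i, g b) * x' $ b / D else 0)"
      by (rule sum.swap)
    also have "\<dots> = (\<Sum>b<s. M $$ (i, g b) * x' $ b / D)"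
      using gb by (auto intro!: sum.cong)
    finally show ?thesis by (simp add: sum_divide_distrib)
  qed
  have Mxf: "(M *\<^sub>v x) $ f a = v $ f a" if a: "a < s" for a
  proof -
    have "(\<Sum>b<s. M $$ (f a, g b) * x' $ b) = (S *\<^sub>v x') $ a"
    proof -
      have "x' \<in> carrier_vec (dim_row (adj_mat S))" unfolding x'_def by (rule mult_carrier_row)
      moreover have "dim_row (adj_mat S) = s" using adj_mat(1)[OF Sc] by auto
      ultimately have x'c: "x' \<in> carrier_vec s" by simp
      show ?thesis using a x'c unfolding S_def by (auto simp: scalar_prod_def atLeast0LessThan intro!: sum.cong)
    qed
    also have "\<dots> = D * v $ f a" using a Sx' by (simp add: y_def)
    finally show ?thesis using Mx[OF fb[OF a]] D0 by simp
  qed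
  define u where "u = v - M *\<^sub>v x"
  have uc: "u \<in> carrier_vec m" unfolding u_def using v M xc by simp
  have uidx: "u $ i = v $ i - (M *\<^sub>v x) $ i" if "i < m" for i
    unfolding u_def using that v M xc by simp
  have uf: "u $ f a = 0" if "a < s" for a using uidx[OF fb[OF that]] Mxf[OF that] by simp
  have uJ: "u $ i = 0" if i: "i \<in> JT" for i
  proof -
    have im: "i < m" "i \<notin> f ` {..<s}" using i unfolding JT_def by auto
    have "z i \<bullet> u = (\<Sum>c<m. z i $ c * u $ c)"
      using uc by (auto simp: scalar_prod_def atLeast0LessThan)
    also have "\<dots> = z i $ i * u $ i + (\<Sum>a<s. z i $ f a * u $ f a)"
      by (rule supp_sum1[OF finj _ im]) (use fb z_props(2) im in auto)
    also have "(\<Sum>a<s. z i $ f a * u $ f a) = 0" using uf by simp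
    finally have zu: "z i \<bullet> u = D * u $ i" using z_props(1)[OF i] by simp
    have "z i \<bullet> u = z i \<bullet> v - z i \<bullet> (M *\<^sub>v x)"
      unfolding u_def by (rule scalar_prod_minus_distrib[OF z_props(4) v]) (use M xc in simp)
    also have "z i \<bullet> (M *\<^sub>v x) = (transpose_mat M *\<^sub>v z i) \<bullet> x"
      by (rule transpose_vec_mult_scalar[OF M xc z_props(4), symmetric])
    also have "\<dots> = 0" using z_props(3)[OF im(1)] xc by simp
    finally have "z i \<bullet> u = 0" using orth[OF i] by simp
    with zu D0 show ?thesis by simp
  qed
  have "u = 0\<^sub>v m"
  proof (rule eq_vecI)
    fix i assume "i < dim_vec (0\<^sub>v m :: 'a vec)"
    then have i: "i < m" by simp
    show "u $ i = 0\<^sub>v m $ i"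
    proof (cases "i \<in> f ` {..<s}")
      case True then show ?thesis using uf i by auto
    next
      case False then show ?thesis using uJ i unfolding JT_def by auto
    qed
  qed (use uc in simp)
  then have u0: "u $ i = 0" if "i < m" for i using that by simp
  have "v = M *\<^sub>v x"
  proof (rule eq_vecI)
    fix i assume "i < dim_vec (M *\<^sub>v x)"
    then have i: "i < m" using M by simp
    show "v $ i = (M *\<^sub>v x) $ i" using uidx[OF i] u0[OF i] by simp
  qed (use v M in simp)
  then show ?thesis unfolding mat_image_def using xc M by auto
qed

end

lemma symbolC_carrier[simp]: "symbolC m n k A \<xi> \<in> carrier_mat m n"
  by (simp add: symbolC_def)

lemma symbolC_dims[simp]: "dim_row (symbolC m n k A \<xi>) = m" "dim_col (symbolC m n k A \<xi>) = n"
  by (simp_all add: symbolC_def)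

lemma symbolC_index[simp]: "i < m \<Longrightarrow> j < n \<Longrightarrow> symbolC m n k A \<xi> $$ (i,j) = hpoly_eval k (A i j) \<xi>"
  by (simp add: symbolC_def)

lemma symbolC_transpose: "symbolC n m k (\<lambda>i j. A j i) \<xi> = transpose_mat (symbolC m n k A \<xi>)"
  by (rule eq_matI) auto

lemma kv_cong:
  assumes "\<And>a. a < s \<Longrightarrow> f a = f' a" "\<And>b. b < Suc s \<Longrightarrow> g b = g' b"
  shows "kv M s f g = kv M s f' g'"
proof -
  have "mat_delete (sel M (Suc s) f g) s b = mat_delete (sel M (Suc s) f' g') s b" for b
    by (rule eq_matI) (use assms in \<open>auto simp: mat_delete_def sel_def\<close>)
  then have cf: "cofactor (sel M (Suc s) f g) s b = cofactor (sel M (Suc s) f' g') s b" for b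
    by (simp add: cofactor_def)
  have "(\<Sum>b<Suc s. if g b = c then cofactor (sel M (Suc s) f g) s b else 0) =
        (\<Sum>b<Suc s. if g' b = c then cofactor (sel M (Suc s) f' g') s b else 0)" for c
    by (rule sum.cong[OF refl]) (simp add: cf assms(2))
  then show ?thesis unfolding kv_def by simp
qed

lemma Hp_kv:
  fixes A :: "nat \<Rightarrow> nat \<Rightarrow> ('d::finite \<Rightarrow> nat) \<Rightarrow> real"
  assumes f: "\<And>a. a < r \<Longrightarrow> f a < m" and g: "\<And>b. b < Suc r \<Longrightarrow> g b < n" and i: "i < n"
  shows "(\<lambda>\<xi>. kv (symbolC m n k A \<xi>) r f g $ i) \<in> Hp (r * k)"
proof -
  have e: "kv (symbolC m n k A \<xi>) r f g $ i =
     (\<Sum>b<Suc r. if g b = i then cofactor (sel (symbolC m n k A \<xi>) (Suc r) f g) r b else 0)" for \<xi>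
    using i by (simp add: kv_def)
  have "(\<lambda>\<xi>. \<Sum>b<Suc r. if g b = i then cofactor (sel (symbolC m n k A \<xi>) (Suc r) f g) r b else 0) \<in> Hp (r*k)"
  proof (rule Hp_sum)
    fix b assume b: "b \<in> {..<Suc r}"
    show "(\<lambda>\<xi>. if g b = i then cofactor (sel (symbolC m n k A \<xi>) (Suc r) f g) r b else 0) \<in> Hp (r*k)"
    proof (cases "g b = i")
      case False then show ?thesis using Hp_zero by simp
    next
      case True
      have "(\<lambda>\<xi>. det (mat_delete (sel (symbolC m n k A \<xi>) (Suc r) f g) r b)) \<in> Hp (r*k)"
      proof (rule Hp_det)
        show "mat_delete (sel (symbolC m n k A \<xi>) (Suc r) f g) r b \<in> carrier_mat r r" for \<xi>
          by (simp add: mat_delete_def)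
        fix i' j' assume ij: "i' < r" "j' < r"
        define j'' where "j'' = (if j' < b then j' else Suc j')"
        have j'': "j'' < Suc r" using ij unfolding j''_def by auto
        have "mat_delete (sel (symbolC m n k A \<xi>) (Suc r) f g) r b $$ (i', j') = hpoly_eval k (A (f i') (g j'')) \<xi>" for \<xi>
          using ij j'' f g unfolding mat_delete_def j''_def by auto
        then show "(\<lambda>\<xi>. mat_delete (sel (symbolC m n k A \<xi>) (Suc r) f g) r b $$ (i', j')) \<in> Hp k"
          by (intro HpI) 
      qed
      then have "(\<lambda>\<xi>. complex_of_real ((-1)^(r+b)) * det (mat_delete (sel (symbolC m n k A \<xi>) (Suc r) f g) r b)) \<in> Hp (r*k)"
        by (rule Hp_scale)
      then show ?thesis using True by (simp add: cofactor_def)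
    qed
  qed simp
  then show ?thesis unfolding e .
qed

lemma construct:
  fixes A :: "nat \<Rightarrow> nat \<Rightarrow> ('d::finite \<Rightarrow> nat) \<Rightarrow> real"
  assumes Z: "\<And>\<xi> f g. (\<forall>a<Suc r. f a < m) \<Longrightarrow> (\<forall>b<Suc r. g b < n) \<Longrightarrow> det (sel (symbolC m n k A \<xi>) (Suc r) f g) = 0"
  shows "\<exists>p B'. (\<forall>\<xi>. symbolC m n k A \<xi> * symbolC n p (r*k) B' \<xi> = 0\<^sub>m m p) \<and>
     (\<forall>\<xi> f g j. (\<forall>a<r. f a < m) \<longrightarrow> (\<forall>b<r. g b < n) \<longrightarrow> j < n \<longrightarrow>
        (\<exists>c<p. col (symbolC n p (r*k) B' \<xi>) c = kv (symbolC m n k A \<xi>) r f (g(r:=j))))"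
proof -
  define Pairs where "Pairs = (({..<r} \<rightarrow>\<^sub>E {..<m}) \<times> ({..<Suc r} \<rightarrow>\<^sub>E {..<n}))"
  have fP: "finite Pairs" unfolding Pairs_def by (intro finite_cartesian_product finite_PiE) auto
  obtain L where L: "set L = Pairs" using finite_list[OF fP] by blast
  define p where "p = length L"
  have Lp: "L ! c \<in> Pairs" if "c < p" for c using that L unfolding p_def by auto
  have Lf: "fst (L ! c) a < m" if "c < p" "a < r" for c a using Lp[OF that(1)] that(2) unfolding Pairs_def by auto
  have Lg: "snd (L ! c) b < n" if "c < p" "b < Suc r" for c b using Lp[OF that(1)] that(2) unfolding Pairs_def by auto
  define Bent where "Bent = (\<lambda>i c \<xi>. kv (symbolC m n k A \<xi>) r (fst (L ! c)) (snd (L ! c)) $ i)"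
  have HB: "Bent i c \<in> Hp (r*k)" if "i < n" "c < p" for i c
    unfolding Bent_def by (rule Hp_kv) (use Lf Lg that in auto)
  have "\<forall>i c. \<exists>coef. i < n \<longrightarrow> c < p \<longrightarrow> (\<forall>\<xi>. Bent i c \<xi> = hpoly_eval (r*k) coef \<xi>)"
    using HB unfolding Hp_def by blast
  then obtain B' where B': "\<And>i c \<xi>. i < n \<Longrightarrow> c < p \<Longrightarrow> Bent i c \<xi> = hpoly_eval (r*k) (B' i c) \<xi>"
    by metis
  have colB: "col (symbolC n p (r*k) B' \<xi>) c = kv (symbolC m n k A \<xi>) r (fst (L ! c)) (snd (L ! c))" if c: "c < p" for \<xi> c
    by (rule eq_vecI) (use c B' in \<open>auto simp: Bent_def\<close>)
  have kvk: "symbolC m n k A \<xi> *\<^sub>v kv (symbolC m n k A \<xi>) r f g = 0\<^sub>v m"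
    if f: "\<And>a. a < r \<Longrightarrow> f a < m" and g: "\<And>b. b < Suc r \<Longrightarrow> g b < n" for \<xi> f g
  proof (rule kv_kernel[OF symbolC_carrier g])
    fix i assume i: "i < m"
    show "det (sel (symbolC m n k A \<xi>) (Suc r) (f(r := i)) g) = 0"
      by (rule Z) (use f g i in \<open>auto simp: less_Suc_eq\<close>)
  qed
  have prod0: "symbolC m n k A \<xi> * symbolC n p (r*k) B' \<xi> = 0\<^sub>m m p" for \<xi>
  proof (rule eq_matI)
    fix i c assume ic: "i < dim_row (0\<^sub>m m p :: complex mat)" "c < dim_col (0\<^sub>m m p :: complex mat)"
    then have i: "i < m" and c: "c < p" by auto
    have "(symbolC m n k A \<xi> * symbolC n p (r*k) B' \<xi>) $$ (i,c) = row (symbolC m n k A \<xi>) i \<bullet> col (symbolC n p (r*k) B' \<xi>) c"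
      using i c by simp
    also have "\<dots> = (symbolC m n k A \<xi> *\<^sub>v col (symbolC n p (r*k) B' \<xi>) c) $ i" using i by simp
    also have "\<dots> = 0"
    proof -
      have "symbolC m n k A \<xi> *\<^sub>v col (symbolC n p (r*k) B' \<xi>) c = 0\<^sub>v m"
        using colB[OF c] kvk[OF Lf[OF c] Lg[OF c]] by simp
      then show ?thesis using i by simp
    qed
    finally show "(symbolC m n k A \<xi> * symbolC n p (r*k) B' \<xi>) $$ (i,c) = 0\<^sub>m m p $$ (i,c)" using i c by simp
  qed auto
  have cols: "\<exists>c<p. col (symbolC n p (r*k) B' \<xi>) c = kv (symbolC m n k A \<xi>) r f (g(r:=j))"
    if f: "\<forall>a<r. f a < m" and g: "\<forall>b<r. g b < n" and j: "j < n" for \<xi> f g j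
  proof -
    define pr where "pr = (restrict f {..<r}, restrict (g(r:=j)) {..<Suc r})"
    have "pr \<in> Pairs" unfolding pr_def Pairs_def using f g j by (auto simp: less_Suc_eq)
    then obtain c where c: "c < p" "L ! c = pr" using L unfolding p_def by (metis in_set_conv_nth)
    have "col (symbolC n p (r*k) B' \<xi>) c = kv (symbolC m n k A \<xi>) r (fst pr) (snd pr)"
      using colB[OF c(1)] c(2) by simp
    also have "\<dots> = kv (symbolC m n k A \<xi>) r f (g(r:=j))"
      by (rule kv_cong) (auto simp: pr_def)
    finally show ?thesis using c(1) by blast
  qed
  show ?thesis using prod0 cols by blast
qed

lemma hpoly0: "hpoly_eval 0 c (\<xi>::'d::finite \<Rightarrow> complex) = complex_of_real (c (\<lambda>_. 0))"
proof -
  have h: "hmonos 0 = {(\<lambda>_. 0) :: 'd \<Rightarrow> nat}" by (auto simp: hmonos_def)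
  show ?thesis by (simp add: hpoly_eval_def h)
qed

lemma hpoly_at0: assumes k: "k > 0" shows "hpoly_eval k c (\<lambda>_::'d::finite. 0) = 0"
proof -
  have "(\<Prod>l\<in>UNIV. (0::complex) ^ \<alpha> l) = 0" if "\<alpha> \<in> hmonos k" for \<alpha> :: "'d \<Rightarrow> nat"
  proof -
    have "sum \<alpha> UNIV = k" using that by (simp add: hmonos_def)
    then obtain l where "\<alpha> l \<noteq> 0" using k by (metis sum.neutral neq0_conv)
    then show ?thesis by (intro prod_zero) auto
  qed
  then show ?thesis unfolding hpoly_eval_def by simp
qed

lemma mult_vec_sel_cols:
  fixes B :: "'a::comm_ring_1 mat"
  assumes B: "B \<in> carrier_mat n p" and J: "finite J" and cj: "\<And>j. j \<in> J \<Longrightarrow> cj j < p" and i: "i < n"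
  shows "(B *\<^sub>v vec p (\<lambda>c. \<Sum>j\<in>J. if cj j = c then a j else 0)) $ i = (\<Sum>j\<in>J. a j * B $$ (i, cj j))"
proof -
  have "(B *\<^sub>v vec p (\<lambda>c. \<Sum>j\<in>J. if cj j = c then a j else 0)) $ i
      = (\<Sum>c<p. B $$ (i,c) * (\<Sum>j\<in>J. if cj j = c then a j else 0))"
    using B i by (auto simp: scalar_prod_def atLeast0LessThan intro!: sum.cong)
  also have "\<dots> = (\<Sum>c<p. \<Sum>j\<in>J. if cj j = c then a j * B $$ (i, cj j) else 0)"
    apply (rule sum.cong[OF refl])
    apply (subst sum_distrib_left)
    apply (rule sum.cong[OF refl])
    by auto
  also have "\<dots> = (\<Sum>j\<in>J. \<Sum>c<p. if cj j = c then a j * B $$ (i, cj j) else 0)"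
    by (rule sum.swap)
  also have "\<dots> = (\<Sum>j\<in>J. a j * B $$ (i, cj j))"
    using cj by (auto intro!: sum.cong)
  finally show ?thesis .
qed

lemma zero_mat_mult_vec: "(x::'a::comm_ring_1 vec) \<in> carrier_vec p \<Longrightarrow> 0\<^sub>m m p *\<^sub>v x = 0\<^sub>v m"
  by (rule eq_vecI) (auto simp: scalar_prod_def)

lemma forward:
  fixes A :: "nat \<Rightarrow> nat \<Rightarrow> ('d::finite \<Rightarrow> nat) \<Rightarrow> real"
  assumes cr: "\<forall>\<xi>::'d \<Rightarrow> complex. (\<exists>l. \<xi> l \<noteq> 0) \<longrightarrow> crank (symbolC m n k A \<xi>) = r"
  shows "\<exists>(p::nat) (q::nat) (kB::nat) (kQ::nat)
        (B :: nat \<Rightarrow> nat \<Rightarrow> ('d \<Rightarrow> nat) \<Rightarrow> real) (Q :: nat \<Rightarrow> nat \<Rightarrow> ('d \<Rightarrow> nat) \<Rightarrow> real).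
       (\<forall>\<xi>::'d \<Rightarrow> real.
          symbolC m n k A (\<lambda>l. complex_of_real (\<xi> l)) * symbolC n p kB B (\<lambda>l. complex_of_real (\<xi> l)) = 0\<^sub>m m p
        \<and> symbolC q m kQ Q (\<lambda>l. complex_of_real (\<xi> l)) * symbolC m n k A (\<lambda>l. complex_of_real (\<xi> l)) = 0\<^sub>m q n)
     \<and> (\<forall>\<xi>::'d \<Rightarrow> complex. (\<exists>l. \<xi> l \<noteq> 0) \<longrightarrow>
          mat_image (symbolC n p kB B \<xi>) = mat_kernel (symbolC m n k A \<xi>)
        \<and> mat_image (symbolC m n k A \<xi>) = mat_kernel (symbolC q m kQ Q \<xi>))"
proof -
  let ?A = "symbolC m n k A"
  define AT where "AT = (\<lambda>i j. A j i)"
  have AT: "symbolC n m k AT \<xi> = transpose_mat (?A \<xi>)" for \<xi> unfolding AT_def by (rule symbolC_transpose)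
  define one where "one = (\<lambda>_::'d. 1::complex)"
  have one: "\<exists>l. one l \<noteq> 0" unfolding one_def by simp
  have rk: "vec_space.rank m (?A \<xi>) = r" if "\<exists>l. \<xi> l \<noteq> 0" for \<xi>
    using cr that unfolding crank_def by simp
  have ZA: "det (sel (?A \<xi>) (Suc r) f g) = 0" if f: "\<forall>a<Suc r. f a < m" and g: "\<forall>b<Suc r. g b < n" for \<xi> f g
  proof -
    have nz: "det (sel (?A \<eta>) (Suc r) f g) = 0" if "\<exists>l. \<eta> l \<noteq> 0" for \<eta>
    proof (rule ccontr)
      assume "det (sel (?A \<eta>) (Suc r) f g) \<noteq> 0"
      then have "Suc r \<le> vec_space.rank m (?A \<eta>)" using sel_det_rank[OF symbolC_carrier] f g by blast
      with rk[OF that] show False by simp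
    qed
    show ?thesis
    proof (cases "\<exists>l. \<xi> l \<noteq> 0")
      case True then show ?thesis by (rule nz)
    next
      case False
      then have x0: "\<xi> = (\<lambda>_. 0)" by auto
      show ?thesis
      proof (cases "k = 0")
        case True
        have "?A \<xi> = ?A one" by (rule eq_matI) (auto simp: True hpoly0)
        then show ?thesis using nz[OF one] by simp
      next
        case False
        have "sel (?A \<xi>) (Suc r) f g = 0\<^sub>m (Suc r) (Suc r)"
          by (rule eq_matI) (use f g False in \<open>auto simp: x0 hpoly_at0\<close>)
        then show ?thesis by simp
      qed
    qed
  qed
  have ZAT: "det (sel (symbolC n m k AT \<xi>) (Suc r) f g) = 0" if f: "\<forall>a<Suc r. f a < n" and g: "\<forall>b<Suc r. g b < m" for \<xi> f g
    unfolding AT using det_sel_transpose[OF symbolC_carrier, of "Suc r" g m f n k A \<xi>] f g ZA[OF g f] by simp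
  obtain p B' where B1: "\<And>\<xi>. ?A \<xi> * symbolC n p (r*k) B' \<xi> = 0\<^sub>m m p"
    and B2: "\<And>\<xi> f g j. (\<forall>a<r. f a < m) \<Longrightarrow> (\<forall>b<r. g b < n) \<Longrightarrow> j < n \<Longrightarrow>
        (\<exists>c<p. col (symbolC n p (r*k) B' \<xi>) c = kv (?A \<xi>) r f (g(r:=j)))"
    using construct[of r m n k A, OF ZA] by blast
  obtain q Q'' where Q1: "\<And>\<xi>. symbolC n m k AT \<xi> * symbolC m q (r*k) Q'' \<xi> = 0\<^sub>m n q"
    and Q2: "\<And>\<xi> f g j. (\<forall>a<r. f a < n) \<Longrightarrow> (\<forall>b<r. g b < m) \<Longrightarrow> j < m \<Longrightarrow>
        (\<exists>c<q. col (symbolC m q (r*k) Q'' \<xi>) c = kv (symbolC n m k AT \<xi>) r f (g(r:=j)))"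
    using construct[of r n m k AT, OF ZAT] by blast
  define Qc where "Qc = (\<lambda>i j. Q'' j i)"
  have QT: "symbolC q m (r*k) Qc \<xi> = transpose_mat (symbolC m q (r*k) Q'' \<xi>)" for \<xi>
    unfolding Qc_def by (rule symbolC_transpose)
  have QA: "symbolC q m (r*k) Qc \<xi> * ?A \<xi> = 0\<^sub>m q n" for \<xi>
  proof -
    have "symbolC q m (r*k) Qc \<xi> * ?A \<xi> = transpose_mat (symbolC m q (r*k) Q'' \<xi>) * transpose_mat (symbolC n m k AT \<xi>)"
      unfolding QT AT by simp
    also have "\<dots> = transpose_mat (symbolC n m k AT \<xi> * symbolC m q (r*k) Q'' \<xi>)"
      by (rule transpose_mult[symmetric]) auto
    also have "\<dots> = 0\<^sub>m q n" unfolding Q1 by simp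
    finally show ?thesis .
  qed
  have exact: "mat_image (symbolC n p (r*k) B' \<xi>) = mat_kernel (?A \<xi>)
        \<and> mat_image (?A \<xi>) = mat_kernel (symbolC q m (r*k) Qc \<xi>)" if nz: "\<exists>l. \<xi> l \<noteq> 0" for \<xi>
  proof -
    let ?B = "symbolC n p (r*k) B' \<xi>" and ?Q = "symbolC q m (r*k) Qc \<xi>"
    obtain f g where md: "minor_data (?A \<xi>) m n r f g"
      using exists_minor[OF symbolC_carrier, of m n k A \<xi>] rk[OF nz] by auto
    interpret minor "?A \<xi>" m n r f g by (rule minor.intro[OF md])
    have E1a: "mat_image ?B \<subseteq> mat_kernel (?A \<xi>)"
    proof
      fix y assume "y \<in> mat_image ?B"
      then obtain x where x: "x \<in> carrier_vec p" "y = ?B *\<^sub>v x" unfolding mat_image_def by auto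
      have "?A \<xi> *\<^sub>v y = (?A \<xi> * ?B) *\<^sub>v x" unfolding x(2) by (rule assoc_mult_mat_vec[symmetric]) (use x in auto)
      also have "\<dots> = 0\<^sub>v m" unfolding B1 using x by (simp add: zero_mat_mult_vec)
      finally show "y \<in> mat_kernel (?A \<xi>)" by (intro mat_kernelI[OF symbolC_carrier]) (use x in \<open>auto intro: mult_mat_vec_carrier[OF symbolC_carrier]\<close>)
    qed
    have E1b: "mat_kernel (?A \<xi>) \<subseteq> mat_image ?B"
    proof
      fix v assume v: "v \<in> mat_kernel (?A \<xi>)"
      have vc: "v \<in> carrier_vec n" and Mv: "?A \<xi> *\<^sub>v v = 0\<^sub>v m" using mat_kernelD[OF symbolC_carrier v] by auto
      have "\<forall>j\<in>J. \<exists>c<p. col ?B c = w j"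
      proof
        fix j assume "j \<in> J" then have "j < n" unfolding J_def by auto
        then show "\<exists>c<p. col ?B c = w j" unfolding w_def using B2 fb gb by blast
      qed
      then obtain cj where cj: "\<And>j. j \<in> J \<Longrightarrow> cj j < p \<and> col ?B (cj j) = w j" by metis
      define x where "x = vec p (\<lambda>c. \<Sum>j\<in>J. if cj j = c then v $ j / D else 0)"
      have "?B *\<^sub>v x = v"
      proof (rule eq_vecI)
        fix i assume "i < dim_vec v" then have i: "i < n" using vc by simp
        have "(?B *\<^sub>v x) $ i = (\<Sum>j\<in>J. v $ j / D * ?B $$ (i, cj j))"
          unfolding x_def by (rule mult_vec_sel_cols[OF symbolC_carrier finJ _ i]) (use cj in blast)
        also have "\<dots> = (\<Sum>j\<in>J. v $ j / D * w j $ i)"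
        proof (rule sum.cong[OF refl])
          fix j assume j: "j \<in> J"
          have cjj: "cj j < p" and ce: "col ?B (cj j) = w j" using cj[OF j] by auto
          have "w j $ i = ?B $$ (i, cj j)" unfolding ce[symmetric] by (rule index_col) (use i cjj in simp_all)
          then show "v $ j / D * ?B $$ (i, cj j) = v $ j / D * w j $ i" by simp
        qed
        also have "\<dots> = (\<Sum>j\<in>J. v $ j * w j $ i) / D" by (simp add: sum_divide_distrib)
        also have "\<dots> = v $ i" using kernel_span[OF vc Mv i] D0 by (simp add: field_simps)
        finally show "(?B *\<^sub>v x) $ i = v $ i" .
      qed (use vc in simp)
      moreover have "x \<in> carrier_vec (dim_col ?B)" unfolding x_def by simp
      ultimately show "v \<in> mat_image ?B" unfolding mat_image_def by blast
    qed
    have E2a: "mat_image (?A \<xi>) \<subseteq> mat_kernel ?Q"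
    proof
      fix y assume "y \<in> mat_image (?A \<xi>)"
      then obtain x where x: "x \<in> carrier_vec n" "y = ?A \<xi> *\<^sub>v x" unfolding mat_image_def by auto
      have "?Q *\<^sub>v y = (?Q * ?A \<xi>) *\<^sub>v x" unfolding x(2) by (rule assoc_mult_mat_vec[symmetric]) (use x in auto)
      also have "\<dots> = 0\<^sub>v q" unfolding QA using x by (simp add: zero_mat_mult_vec)
      finally show "y \<in> mat_kernel ?Q" by (intro mat_kernelI[OF symbolC_carrier]) (use x in \<open>auto intro: mult_mat_vec_carrier[OF symbolC_carrier]\<close>)
    qed
    have E2b: "mat_kernel ?Q \<subseteq> mat_image (?A \<xi>)"
    proof
      fix v assume v: "v \<in> mat_kernel ?Q"
      have vc: "v \<in> carrier_vec m" and Qv: "?Q *\<^sub>v v = 0\<^sub>v q" using mat_kernelD[OF symbolC_carrier v] by auto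
      show "v \<in> mat_image (?A \<xi>)"
      proof (rule coker[OF vc])
        fix i assume i: "i \<in> JT"
        then have im: "i < m" unfolding JT_def by auto
        obtain c where c: "c < q" "col (symbolC m q (r*k) Q'' \<xi>) c = kv (symbolC n m k AT \<xi>) r g (f(r:=i))"
          using Q2[of g f i \<xi>] fb gb im by blast
        have "z i = col (symbolC m q (r*k) Q'' \<xi>) c" unfolding z_def c(2) AT ..
        also have "\<dots> = row ?Q c" unfolding QT using c(1) by simp
        finally have "z i \<bullet> v = (?Q *\<^sub>v v) $ c" using c(1) by simp
        then show "z i \<bullet> v = 0" using Qv c(1) by simp
      qed
    qed
    show ?thesis using E1a E1b E2a E2b by blast
  qed
  show ?thesis
    apply (rule exI[of _ p], rule exI[of _ q], rule exI[of _ "r*k"], rule exI[of _ "r*k"])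
    apply (rule exI[of _ B'], rule exI[of _ Qc])
    using B1 QA exact by blast
qed

definition seg :: "('d \<Rightarrow> complex) \<Rightarrow> ('d \<Rightarrow> complex) \<Rightarrow> real \<Rightarrow> 'd \<Rightarrow> complex" where
  "seg \<xi> \<eta> t = (\<lambda>l. (1 - complex_of_real t) * \<xi> l + complex_of_real t * \<eta> l)"

lemma seg_0: "seg \<xi> \<eta> 0 = \<xi>" and seg_1: "seg \<xi> \<eta> 1 = \<eta>"
  by (auto simp: seg_def)

lemma cont_seg: "continuous (at t0) (\<lambda>t. seg \<xi> \<eta> t l)"
  unfolding seg_def by (intro continuous_intros)

lemma cont_hpoly:
  assumes "\<And>l. continuous (at t0) (\<lambda>t::real. x t l)"
  shows "continuous (at t0) (\<lambda>t. hpoly_eval k c (x t))"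
  unfolding hpoly_eval_def by (intro continuous_intros assms)

lemma cont_det:
  fixes F :: "real \<Rightarrow> complex mat"
  assumes c: "\<And>t. F t \<in> carrier_mat s s"
    and e: "\<And>i j. i < s \<Longrightarrow> j < s \<Longrightarrow> continuous (at t0) (\<lambda>t. F t $$ (i,j))"
  shows "continuous (at t0) (\<lambda>t. det (F t))"
proof -
  have d: "det (F t) = (\<Sum>p\<in>{p. p permutes {0..<s}}. of_int (sign p) * (\<Prod>i\<in>{0..<s}. F t $$ (i, p i)))" for t
    using c[of t] unfolding det_def by simp
  show ?thesis unfolding d
  proof (intro continuous_intros)
    fix p i assume p: "p \<in> {p. p permutes {0..<s}}" and i: "i \<in> {0..<s}"
    then have "p i < s" by (simp add: permutes_in_image)
    then show "continuous (at t0) (\<lambda>t. F t $$ (i, p i))" using e i by simp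
  qed
qed

lemma cont_sel:
  assumes x: "\<And>l. continuous (at t0) (\<lambda>t::real. x t l)"
    and f: "\<forall>a<s. f a < m" and g: "\<forall>b<s. g b < n"
  shows "continuous (at t0) (\<lambda>t. det (sel (symbolC m n k A (x t)) s f g))"
proof (rule cont_det)
  fix i j assume "i < s" "j < s"
  then have "sel (symbolC m n k A (x t)) s f g $$ (i,j) = hpoly_eval k (A (f i) (g j)) (x t)" for t
    using f g by simp
  then show "continuous (at t0) (\<lambda>t. sel (symbolC m n k A (x t)) s f g $$ (i,j))"
    using cont_hpoly[OF x] by simp
qed simp

lemma ev_ne:
  assumes "continuous (at t0) F" "F t0 \<noteq> (0::complex)"
  shows "eventually (\<lambda>t. F t \<noteq> 0) (at t0)"
  using assms tendsto_imp_eventually_ne continuous_at by blast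

lemma seg_const:
  fixes A :: "nat \<Rightarrow> nat \<Rightarrow> ('d::finite \<Rightarrow> nat) \<Rightarrow> real" and B :: "nat \<Rightarrow> nat \<Rightarrow> ('d \<Rightarrow> nat) \<Rightarrow> real"
  assumes ex: "\<forall>\<xi>::'d \<Rightarrow> complex. (\<exists>l. \<xi> l \<noteq> 0) \<longrightarrow> mat_image (symbolC n p kB B \<xi>) = mat_kernel (symbolC m n k A \<xi>)"
    and nz: "\<forall>t\<in>{0..1::real}. \<exists>l. seg \<xi> \<eta> t l \<noteq> 0"
  shows "crank (symbolC m n k A \<xi>) = crank (symbolC m n k A \<eta>)"
proof -
  define h where "h t = vec_space.rank m (symbolC m n k A (seg \<xi> \<eta> t))" for t
  define hb where "hb t = vec_space.rank n (symbolC n p kB B (seg \<xi> \<eta> t))" for t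
  have sum: "hb t + h t = n" if "t \<in> {0..1}" for t
  proof -
    have "\<exists>l. seg \<xi> \<eta> t l \<noteq> 0" using nz that by blast
    then have "mat_image (symbolC n p kB B (seg \<xi> \<eta> t)) = mat_kernel (symbolC m n k A (seg \<xi> \<eta> t))"
      using ex by blast
    then show ?thesis unfolding h_def hb_def by (rule rank_sum[OF symbolC_carrier symbolC_carrier])
  qed
  have loc: "\<forall>a\<in>{0..1}. eventually (\<lambda>b. h a = h b) (at a within {0..1})"
  proof
    fix t0 :: real assume t0: "t0 \<in> {0..1}"
    obtain f g where md: "minor_data (symbolC m n k A (seg \<xi> \<eta> t0)) m n (h t0) f g"
      unfolding h_def using exists_minor[OF symbolC_carrier] by blast
    obtain f' g' where md': "minor_data (symbolC n p kB B (seg \<xi> \<eta> t0)) n p (hb t0) f' g'"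
      unfolding hb_def using exists_minor[OF symbolC_carrier] by blast
    have fg: "\<forall>a<h t0. f a < m" "\<forall>b<h t0. g b < n" "det (sel (symbolC m n k A (seg \<xi> \<eta> t0)) (h t0) f g) \<noteq> 0"
      using md unfolding minor_data_def by auto
    have fg': "\<forall>a<hb t0. f' a < n" "\<forall>b<hb t0. g' b < p" "det (sel (symbolC n p kB B (seg \<xi> \<eta> t0)) (hb t0) f' g') \<noteq> 0"
      using md' unfolding minor_data_def by auto
    have e1: "eventually (\<lambda>t. det (sel (symbolC m n k A (seg \<xi> \<eta> t)) (h t0) f g) \<noteq> 0) (at t0)"
      by (rule ev_ne[OF cont_sel[OF cont_seg fg(1,2)] fg(3)])
    have e2: "eventually (\<lambda>t. det (sel (symbolC n p kB B (seg \<xi> \<eta> t)) (hb t0) f' g') \<noteq> 0) (at t0)"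
      by (rule ev_ne[OF cont_sel[OF cont_seg fg'(1,2)] fg'(3)])
    have "eventually (\<lambda>t. h t0 \<le> h t \<and> hb t0 \<le> hb t) (at t0)"
    proof (rule eventually_mono[OF eventually_conj[OF e1 e2]])
      fix t assume cj: "det (sel (symbolC m n k A (seg \<xi> \<eta> t)) (h t0) f g) \<noteq> 0 \<and>
          det (sel (symbolC n p kB B (seg \<xi> \<eta> t)) (hb t0) f' g') \<noteq> 0"
      have "h t0 \<le> h t" unfolding h_def
        by (rule sel_det_rank[OF symbolC_carrier]) (use fg cj in \<open>auto simp: h_def\<close>)
      moreover have "hb t0 \<le> hb t" unfolding hb_def
        by (rule sel_det_rank[OF symbolC_carrier]) (use fg' cj in \<open>auto simp: hb_def\<close>)
      ultimately show "h t0 \<le> h t \<and> hb t0 \<le> hb t" by simp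
    qed
    then have "eventually (\<lambda>x. x \<noteq> t0 \<longrightarrow> x \<in> UNIV \<longrightarrow> h t0 \<le> h x \<and> hb t0 \<le> hb x) (nhds t0)"
      unfolding eventually_at_filter .
    then have "eventually (\<lambda>x. x \<noteq> t0 \<longrightarrow> x \<in> {0..1} \<longrightarrow> h t0 = h x) (nhds t0)"
    proof (rule eventually_mono)
      fix x assume "x \<noteq> t0 \<longrightarrow> x \<in> UNIV \<longrightarrow> h t0 \<le> h x \<and> hb t0 \<le> hb x"
      then show "x \<noteq> t0 \<longrightarrow> x \<in> {0..1} \<longrightarrow> h t0 = h x"
        using sum[of x] sum[OF t0] by auto
    qed
    then show "eventually (\<lambda>b. h t0 = h b) (at t0 within {0..1})"
      unfolding eventually_at_filter .
  qed
  have "h 0 = h 1" by (rule connected_local_const[OF connected_Icc _ _ loc]) auto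
  then show ?thesis unfolding h_def crank_def by (simp add: seg_0 seg_1)
qed

lemma backward:
  fixes A :: "nat \<Rightarrow> nat \<Rightarrow> ('d::finite \<Rightarrow> nat) \<Rightarrow> real" and B :: "nat \<Rightarrow> nat \<Rightarrow> ('d \<Rightarrow> nat) \<Rightarrow> real"
  assumes ex: "\<forall>\<xi>::'d \<Rightarrow> complex. (\<exists>l. \<xi> l \<noteq> 0) \<longrightarrow> mat_image (symbolC n p kB B \<xi>) = mat_kernel (symbolC m n k A \<xi>)"
  shows "\<exists>r. \<forall>\<xi>::'d \<Rightarrow> complex. (\<exists>l. \<xi> l \<noteq> 0) \<longrightarrow> crank (symbolC m n k A \<xi>) = r"
proof (intro exI allI impI)
  define one where "one = (\<lambda>_::'d. 1::complex)"
  define ii where "ii = (\<lambda>_::'d. \<i>)"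
  fix \<xi> :: "'d \<Rightarrow> complex" assume "\<exists>l. \<xi> l \<noteq> 0"
  then obtain l0 where l0: "\<xi> l0 \<noteq> 0" by blast
  have s2: "\<forall>t\<in>{0..1::real}. \<exists>l. seg ii one t l \<noteq> 0"
  proof
    fix t :: real assume t: "t \<in> {0..1}"
    have "(1 - complex_of_real t) * \<i> + complex_of_real t \<noteq> 0"
    proof
      assume "(1 - complex_of_real t) * \<i> + complex_of_real t = 0"
      then have "Re ((1 - complex_of_real t) * \<i> + complex_of_real t) = 0"
        "Im ((1 - complex_of_real t) * \<i> + complex_of_real t) = 0" by simp_all
      then show False by simp
    qed
    then show "\<exists>l. seg ii one t l \<noteq> 0" unfolding seg_def ii_def one_def by simp
  qed
  show "crank (symbolC m n k A \<xi>) = crank (symbolC m n k A one)"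
  proof (cases "\<forall>t\<in>{0..1::real}. \<exists>l. seg \<xi> one t l \<noteq> 0")
    case True then show ?thesis by (rule seg_const[OF ex])
  next
    case False
    then obtain t0 :: real where t0: "t0 \<in> {0..1}" "\<And>l. seg \<xi> one t0 l = 0" by blast
    have e0: "(1 - complex_of_real t0) * \<xi> l0 + complex_of_real t0 = 0"
      using t0(2)[of l0] unfolding seg_def one_def by simp
    have "t0 \<noteq> 1" using e0 by auto
    have "Im ((1 - complex_of_real t0) * \<xi> l0 + complex_of_real t0) = 0" using e0 by simp
    then have "(1 - t0) * Im (\<xi> l0) = 0" by simp
    with \<open>t0 \<noteq> 1\<close> have im0: "Im (\<xi> l0) = 0" by simp
    have s1: "\<forall>t\<in>{0..1::real}. \<exists>l. seg \<xi> ii t l \<noteq> 0"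
    proof
      fix s :: real assume s: "s \<in> {0..1}"
      have "(1 - complex_of_real s) * \<xi> l0 + complex_of_real s * \<i> \<noteq> 0"
      proof
        assume e: "(1 - complex_of_real s) * \<xi> l0 + complex_of_real s * \<i> = 0"
        have "Im ((1 - complex_of_real s) * \<xi> l0 + complex_of_real s * \<i>) = 0" using e by simp
        then have "s = 0" using im0 by simp
        then have "\<xi> l0 = 0" using e by simp
        with l0 show False by simp
      qed
      then show "\<exists>l. seg \<xi> ii s l \<noteq> 0" unfolding seg_def ii_def by blast
    qed
    have "crank (symbolC m n k A \<xi>) = crank (symbolC m n k A ii)" by (rule seg_const[OF ex s1])
    also have "\<dots> = crank (symbolC m n k A one)" by (rule seg_const[OF ex s2])
    finally show ?thesis .
  qed
qed

theorem theorem2p6: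
  fixes A :: "nat \<Rightarrow> nat \<Rightarrow> ('d::finite \<Rightarrow> nat) \<Rightarrow> real"
    and n m k :: nat
  shows "(\<exists>r. \<forall>\<xi>::'d \<Rightarrow> complex. (\<exists>l. \<xi> l \<noteq> 0) \<longrightarrow> crank (symbolC m n k A \<xi>) = r)
    \<longleftrightarrow>
    (\<exists>(p::nat) (q::nat) (kB::nat) (kQ::nat)
        (B :: nat \<Rightarrow> nat \<Rightarrow> ('d \<Rightarrow> nat) \<Rightarrow> real) (Q :: nat \<Rightarrow> nat \<Rightarrow> ('d \<Rightarrow> nat) \<Rightarrow> real).
       (\<forall>\<xi>::'d \<Rightarrow> real.
          symbolC m n k A (\<lambda>l. complex_of_real (\<xi> l)) * symbolC n p kB B (\<lambda>l. complex_of_real (\<xi> l)) = 0\<^sub>m m p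
        \<and> symbolC q m kQ Q (\<lambda>l. complex_of_real (\<xi> l)) * symbolC m n k A (\<lambda>l. complex_of_real (\<xi> l)) = 0\<^sub>m q n)
     \<and> (\<forall>\<xi>::'d \<Rightarrow> complex. (\<exists>l. \<xi> l \<noteq> 0) \<longrightarrow>
          mat_image (symbolC n p kB B \<xi>) = mat_kernel (symbolC m n k A \<xi>)
        \<and> mat_image (symbolC m n k A \<xi>) = mat_kernel (symbolC q m kQ Q \<xi>)))"
proof
  assume "\<exists>r. \<forall>\<xi>::'d \<Rightarrow> complex. (\<exists>l. \<xi> l \<noteq> 0) \<longrightarrow> crank (symbolC m n k A \<xi>) = r"
  then obtain r where "\<forall>\<xi>::'d \<Rightarrow> complex. (\<exists>l. \<xi> l \<noteq> 0) \<longrightarrow> crank (symbolC m n k A \<xi>) = r" by blast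
  then show "\<exists>(p::nat) (q::nat) (kB::nat) (kQ::nat)
        (B :: nat \<Rightarrow> nat \<Rightarrow> ('d \<Rightarrow> nat) \<Rightarrow> real) (Q :: nat \<Rightarrow> nat \<Rightarrow> ('d \<Rightarrow> nat) \<Rightarrow> real).
       (\<forall>\<xi>::'d \<Rightarrow> real.
          symbolC m n k A (\<lambda>l. complex_of_real (\<xi> l)) * symbolC n p kB B (\<lambda>l. complex_of_real (\<xi> l)) = 0\<^sub>m m p
        \<and> symbolC q m kQ Q (\<lambda>l. complex_of_real (\<xi> l)) * symbolC m n k A (\<lambda>l. complex_of_real (\<xi> l)) = 0\<^sub>m q n)
     \<and> (\<forall>\<xi>::'d \<Rightarrow> complex. (\<exists>l. \<xi> l \<noteq> 0) \<longrightarrow>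
          mat_image (symbolC n p kB B \<xi>) = mat_kernel (symbolC m n k A \<xi>)
        \<and> mat_image (symbolC m n k A \<xi>) = mat_kernel (symbolC q m kQ Q \<xi>))"
    by (rule forward)
next
  assume "\<exists>(p::nat) (q::nat) (kB::nat) (kQ::nat)
        (B :: nat \<Rightarrow> nat \<Rightarrow> ('d \<Rightarrow> nat) \<Rightarrow> real) (Q :: nat \<Rightarrow> nat \<Rightarrow> ('d \<Rightarrow> nat) \<Rightarrow> real).
       (\<forall>\<xi>::'d \<Rightarrow> real.
          symbolC m n k A (\<lambda>l. complex_of_real (\<xi> l)) * symbolC n p kB B (\<lambda>l. complex_of_real (\<xi> l)) = 0\<^sub>m m p
        \<and> symbolC q m kQ Q (\<lambda>l. complex_of_real (\<xi> l)) * symbolC m n k A (\<lambda>l. complex_of_real (\<xi> l)) = 0\<^sub>m q n)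
     \<and> (\<forall>\<xi>::'d \<Rightarrow> complex. (\<exists>l. \<xi> l \<noteq> 0) \<longrightarrow>
          mat_image (symbolC n p kB B \<xi>) = mat_kernel (symbolC m n k A \<xi>)
        \<and> mat_image (symbolC m n k A \<xi>) = mat_kernel (symbolC q m kQ Q \<xi>))"
  then obtain p kB and B :: "nat \<Rightarrow> nat \<Rightarrow> ('d \<Rightarrow> nat) \<Rightarrow> real" where
    ex: "\<forall>\<xi>::'d \<Rightarrow> complex. (\<exists>l. \<xi> l \<noteq> 0) \<longrightarrow> mat_image (symbolC n p kB B \<xi>) = mat_kernel (symbolC m n k A \<xi>)"
    by blast
  show "\<exists>r. \<forall>\<xi>::'d \<Rightarrow> complex. (\<exists>l. \<xi> l \<noteq> 0) \<longrightarrow> crank (symbolC m n k A \<xi>) = r"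
    by (rule backward[OF ex])
qed

end
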